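(* For $k=1,2$ let $b^{(k)}=(b'^{(k)},b_d^{(k)})\in L^1_t(0,t_1;W^{1,\infty}_{(x,y_{loc})}(G\times\mathbb R^p))^d$ with $b^{(k)}_d$ depending only on $(t,x)$ and $b^{(k)}_d(t,x)\le-B^{(k)}_d$ for all $x\in G$ and a.e. $t$, for some $B^{(k)}_d>0$; let $(t_0,x_0)\in S_{t_1}$, $h^{(k)}\in L^\infty(0,t_1;W^{1,\infty}(G))^p$, and let $X^{(k)}(\cdot;t_0,x_0,h^{(k)})$ on $[\tau^{(k)}_-(t_0,x_0,h^{(k)}),t_0]$ be the maximal $\overline G$-valued Carathéodory solution of $X(t)=x_0-\int_t^{t_0}b^{(k)}(s,X(s),h^{(k)}(s,X(s)))ds$. Then for every $s\in[\tau^{(1)}_-(t_0,x_0,h^{(1)})\vee\tau^{(2)}_-(t_0,x_0,h^{(2)}),t_0]$, $$|X^{(2)}(s;t_0,x_0,h^{(2)})-X^{(1)}(s;t_0,x_0,h^{(1)})|\le C_1\big(\|h^{(2)}-h^{(1)}\|_\infty+\|b^{(2)}-b^{(1)}\|_{L^1(0,t_1;h^{(1)},h^{(2)})}\big),$$ where $C_1=\big(1\vee\|D_{(x,y)}b^{(1)}\|_{L^1(0,t_1;h^{(1)},h^{(2)})}\big)\exp\big(\Lambda(D_xh^{(1)},D_xh^{(2)})\|D_{(x,y)}b^{(1)}\|_{L^1(0,t_1;h^{(1)},h^{(2)})}\big)$. Moreover, if $b^{(k)}\in L^-_{x_d}(S_{t_1}\times\mathbb R^p)$ for $k=1,2$,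 then for every $M>0$ there exists $\delta>0$, depending on $h^{(1)},b^{(1)},M$, such that whenever $\|h^{(2)}-h^{(1)}\|_\infty<\delta$, $\|b^{(2)}-b^{(1)}\|_{L^1(0,t_1;h^{(1)},h^{(2)})}<\delta$ and $\|b^{(k)}\|_{L^\infty(0,t_1;h^{(k)})}\le M$ ($k=1,2$), $$|\tau^{(2)}_-(t_0,x_0,h^{(2)})-\tau^{(1)}_-(t_0,x_0,h^{(1)})|+|X^{(2)}(\tau^{(2)}_-(t_0,x_0,h^{(2)});t_0,x_0,h^{(2)})-X^{(1)}(\tau^{(1)}_-(t_0,x_0,h^{(1)});t_0,x_0,h^{(1)})|\le C_5\big(\|h^{(2)}-h^{(1)}\|_\infty+\|b^{(2)}-b^{(1)}\|_{L^1(0,t_1;h^{(1)},h^{(2)})}\big),$$ where $C_5=C\big(1+\bigvee_{k=1,2}\|b^{(k)}\|_{L^\infty(0,t_1;h^{(k)})}\big)\big(1+\|D_{(x,y)}b^{(1)}\|_{L^1(0,t_1;h^{(1)},h^{(2)})}\big)\exp\big[C\big(\bigvee_{k=1,2}\|b^{(k)}\|_{L^\infty(0,t_1;h^{(k)})}+\Lambda(D_xh^{(1)},D_xh^{(2)})\|D_{(x,y)}b^{(1)}\|_{L^1(0,t_1;h^{(1)},h^{(2)})}\big)\big]$ and $C$ depends only on $B^{(k)}_d$, $\|b^{(k)}_d\|_{L^1_{x_d}(0,1;L^\infty_{(t,x')}(S'_{t_1}))}$ ($k=1,2$) and $\|D_{(t,x')}b^{(1)}_d\|_{L^1_{x_d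}(0,1;L^\infty_{(t,x')}(S'_{t_1}))}$.
   Context: $d,p\ge1$, $t_1>0$, $G=\mathbb R^{d-1}\times(0,1)$ with points $x=(x',x_d)$, $S_{t_1}=(0,t_1)\times G$, $S'_{t_1}=(0,t_1)\times\mathbb R^{d-1}$. $L^r_t(0,t_1;L^\infty_{(x,y_{loc})}(G\times\mathbb R^p))=\bigcap_{A>0}L^r(0,t_1;L^\infty(G\times(-A,A)^p))$, likewise with $W^{1,\infty}$. $\|g\|_{L^1_{x_d}(0,1;L^\infty_{(t,x')}(S'_{t_1}))}=\int_0^1\|g(\cdot,\cdot,z)\|_{L^\infty(S'_{t_1})}dz$; $L^1_{x_d}(0,1;W^{1,\infty}_{(t,x')}(S'_{t_1}))$ analogous with $W^{1,\infty}$. $L^-_{x_d}(S_{t_1}\times\mathbb R^p)$: $b=(b',b_d)$ with $b_d$ depending only on $(t,x)$, $b\in L^\infty_t(0,t_1;L^\infty_{(x,y_{loc})})^d\cap L^1_t(0,t_1;W^{1,\infty}_{(x,y_{loc})})^d$, $b_d\in L^1_{x_d}(0,1;W^{1,\infty}_{(t,x')}(S'_{t_1}))$, $b_d\le-B_d<0$. $\vee=\max$, $\bigvee$ = max over $k$. $\|h\|_\infty=\|h\|_{L^\infty(S_{t_1})}$; $\Lambda(\alpha,\overline\alpha)=1+\|\alpha\|_\infty\vee\|\overline\alpha\|_\infty$; with $R=\|h\|_\infty\vee\|\overline h\|_\infty$, $\|g\|_{L^r(0,t_1;h,\overline h)}=\|g\|_{L^r(0,t_1;L^\infty(G\times(-R,R)^p))}$,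 and $(\ldots;h)$ means $h=\overline h$. *)

theory Defs
  imports "HOL-Analysis.Analysis"
begin

text \<open>Points of R^d are vectors real^'d; the distinguished index dd plays
the role of the last coordinate x_d, so that x = (x', x_d). Points of R^p are real^'p.
All norms are Euclidean; norms of derivatives are operator norms, realised through
Lipschitz constants (on convex domains the L-infinity norm of the weak gradient of a
W^{1,infinity} function equals its Lipschitz constant).\<close>

definition Gset :: "'d::finite \<Rightarrow> (real^'d) set" where
  "Gset dd = {x. 0 < x$dd \<and> x$dd < 1}"

definition Gbar :: "'d::finite \<Rightarrow> (real^'d) set" where
  "Gbar dd = closure (Gset dd)"

definition cube :: "real \<Rightarrow> (real^'p::finite) set" where
  "cube A = {y. \<forall>i. \<bar>y$i\<bar> \<le> A}"

definition Dom :: "'d::finite \<Rightarrow> real \<Rightarrow> ((real^'d) \<times> (real^'p::finite)) set" where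
  "Dom dd A = Gbar dd \<times> cube A"

definition supn :: "'a set \<Rightarrow> ('a \<Rightarrow> 'b::real_normed_vector) \<Rightarrow> ennreal" where
  "supn S f = (SUP z\<in>S. ennreal (norm (f z)))"

definition lipc :: "('a::metric_space) set \<Rightarrow> ('a \<Rightarrow> 'b::metric_space) \<Rightarrow> ennreal" where
  "lipc S f = (SUP z\<in>S. SUP w\<in>S - {z}. ennreal (dist (f z) (f w) / dist z w))"

definition ess_sup_t :: "real \<Rightarrow> (real \<Rightarrow> ennreal) \<Rightarrow> ennreal" where
  "ess_sup_t t1 F = Inf {c. AE t in lborel. t \<in> {0<..<t1} \<longrightarrow> F t \<le> c}"

definition L1_t :: "real \<Rightarrow> (real \<Rightarrow> ennreal) \<Rightarrow> ennreal" where
  "L1_t t1 F = (\<integral>\<^sup>+ t. indicator {0<..<t1} t * F t \<partial>lborel)"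

definition bxy :: "(real \<Rightarrow> real^'d \<Rightarrow> real^'p \<Rightarrow> real^'d) \<Rightarrow> real \<Rightarrow> ((real^'d) \<times> (real^'p) \<Rightarrow> real^'d)" where
  "bxy b t = (\<lambda>(x,y). b t x y)"

text \<open>b in L^1_t(0,t1;W^{1,infinity}_{(x,y_loc)}(G x R^p))^d (continuous representative)\<close>
definition L1W1inf_loc :: "real \<Rightarrow> 'd::finite \<Rightarrow> (real \<Rightarrow> real^'d \<Rightarrow> real^'p::finite \<Rightarrow> real^'d) \<Rightarrow> bool" where
  "L1W1inf_loc t1 dd b \<longleftrightarrow>
     (\<lambda>(t,x,y). b t x y) \<in> borel_measurable borel \<and>
     (\<forall>A>0. (AE t in lborel. t \<in> {0<..<t1} \<longrightarrow>
                 supn (Dom dd A) (bxy b t) < \<infinity> \<and> lipc (Dom dd A) (bxy b t) < \<infinity>) \<and>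
            L1_t t1 (\<lambda>t. supn (Dom dd A) (bxy b t) + lipc (Dom dd A) (bxy b t)) < \<infinity>)"

definition LinfLinf_loc :: "real \<Rightarrow> 'd::finite \<Rightarrow> (real \<Rightarrow> real^'d \<Rightarrow> real^'p::finite \<Rightarrow> real^'d) \<Rightarrow> bool" where
  "LinfLinf_loc t1 dd b \<longleftrightarrow> (\<forall>A>0. ess_sup_t t1 (\<lambda>t. supn (Dom dd A) (bxy b t)) < \<infinity>)"

definition bd_indep_y :: "'d::finite \<Rightarrow> (real \<Rightarrow> real^'d \<Rightarrow> real^'p::finite \<Rightarrow> real^'d) \<Rightarrow> bool" where
  "bd_indep_y dd b \<longleftrightarrow> (\<forall>t x y y'. b t x y $ dd = b t x y' $ dd)"

definition bdc :: "'d::finite \<Rightarrow> (real \<Rightarrow> real^'d \<Rightarrow> real^'p::finite \<Rightarrow> real^'d) \<Rightarrow> real \<Rightarrow> real^'d \<Rightarrow> real" where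
  "bdc dd b t x = b t x 0 $ dd"

definition bd_neg :: "real \<Rightarrow> 'd::finite \<Rightarrow> real \<Rightarrow> (real \<Rightarrow> real^'d \<Rightarrow> real^'p::finite \<Rightarrow> real^'d) \<Rightarrow> bool" where
  "bd_neg t1 dd B b \<longleftrightarrow> (\<forall>x\<in>Gset dd. AE t in lborel. t \<in> {0<..<t1} \<longrightarrow> bdc dd b t x \<le> - B)"

text \<open>slices x_d = z: the point (x', z) is represented as x with its dd-th coordinate replaced by z;
  "a.e. (t,x') in S'_{t1}" is expressed through Lebesgue measure on (0,t1) x R^d.\<close>
definition upd :: "'d::finite \<Rightarrow> real \<Rightarrow> real^'d \<Rightarrow> real^'d" where
  "upd dd z x = (\<chi> i. if i = dd then z else x$i)"

definition Sslice :: "real \<Rightarrow> 'd::finite \<Rightarrow> real \<Rightarrow> (real \<times> (real^'d)) set" where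
  "Sslice t1 dd z = {(t,x). 0 < t \<and> t < t1 \<and> x$dd = z}"

definition AE_slice :: "real \<Rightarrow> 'd::finite \<Rightarrow> real \<Rightarrow> (real \<Rightarrow> real^'d \<Rightarrow> bool) \<Rightarrow> bool" where
  "AE_slice t1 dd z P \<longleftrightarrow>
     (AE q in (lborel :: (real \<times> (real^'d)) measure). fst q \<in> {0<..<t1} \<longrightarrow> P (fst q) (upd dd z (snd q)))"

definition slice_Linf :: "real \<Rightarrow> 'd::finite \<Rightarrow> (real \<Rightarrow> real^'d \<Rightarrow> real) \<Rightarrow> real \<Rightarrow> ennreal" where
  "slice_Linf t1 dd f z = Inf {c. AE_slice t1 dd z (\<lambda>t x. ennreal \<bar>f t x\<bar> \<le> c)}"

text \<open>|| D_{(t,x')} f(.,.,z) ||_{L^infinity(S'_{t1})}, as the (essential) Lipschitz constant\<close>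
definition slice_Lip :: "real \<Rightarrow> 'd::finite \<Rightarrow> (real \<Rightarrow> real^'d \<Rightarrow> real) \<Rightarrow> real \<Rightarrow> ennreal" where
  "slice_Lip t1 dd f z = Inf {L. \<exists>g::real \<Rightarrow> real^'d \<Rightarrow> real.
      (\<forall>p\<in>Sslice t1 dd z. \<forall>q\<in>Sslice t1 dd z.
          ennreal \<bar>g (fst p) (snd p) - g (fst q) (snd q)\<bar> \<le> L * ennreal (dist p q)) \<and>
      AE_slice t1 dd z (\<lambda>t x. g t x = f t x)}"

definition Lminus :: "real \<Rightarrow> 'd::finite \<Rightarrow> (real \<Rightarrow> real^'d \<Rightarrow> real^'p::finite \<Rightarrow> real^'d) \<Rightarrow> bool" where
  "Lminus t1 dd b \<longleftrightarrow>
     bd_indep_y dd b \<and> LinfLinf_loc t1 dd b \<and> L1W1inf_loc t1 dd b \<and>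
     (AE z in lborel. z \<in> {0<..<1} \<longrightarrow>
        slice_Linf t1 dd (bdc dd b) z + slice_Lip t1 dd (bdc dd b) z < \<infinity>) \<and>
     (\<integral>\<^sup>+ z. indicator {0<..<1} z * (slice_Linf t1 dd (bdc dd b) z + slice_Lip t1 dd (bdc dd b) z) \<partial>lborel) < \<infinity> \<and>
     (\<exists>B>0. bd_neg t1 dd B b)"

definition bd_L1Linf :: "real \<Rightarrow> 'd::finite \<Rightarrow> (real \<Rightarrow> real^'d \<Rightarrow> real^'p::finite \<Rightarrow> real^'d) \<Rightarrow> ennreal" where
  "bd_L1Linf t1 dd b = (\<integral>\<^sup>+ z. indicator {0<..<1} z * slice_Linf t1 dd (bdc dd b) z \<partial>lborel)"

definition Dbd_L1Linf :: "real \<Rightarrow> 'd::finite \<Rightarrow> (real \<Rightarrow> real^'d \<Rightarrow> real^'p::finite \<Rightarrow> real^'d) \<Rightarrow> ennreal" where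
  "Dbd_L1Linf t1 dd b = (\<integral>\<^sup>+ z. indicator {0<..<1} z * slice_Lip t1 dd (bdc dd b) z \<partial>lborel)"

text \<open>h in L^infinity(0,t1;W^{1,infinity}(G))^p (representative continuous up to the boundary)\<close>
definition LinfW1inf :: "real \<Rightarrow> 'd::finite \<Rightarrow> (real \<Rightarrow> real^'d \<Rightarrow> real^'p::finite) \<Rightarrow> bool" where
  "LinfW1inf t1 dd h \<longleftrightarrow>
     (\<lambda>(t,x). h t x) \<in> borel_measurable borel \<and>
     (AE t in lborel. t \<in> {0<..<t1} \<longrightarrow> supn (Gbar dd) (h t) < \<infinity> \<and> lipc (Gbar dd) (h t) < \<infinity>) \<and>
     ess_sup_t t1 (\<lambda>t. supn (Gset dd) (h t) + lipc (Gset dd) (h t)) < \<infinity>"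

definition Linf_S :: "real \<Rightarrow> 'd::finite \<Rightarrow> (real \<Rightarrow> real^'d \<Rightarrow> real^'p::finite) \<Rightarrow> ennreal" where
  "Linf_S t1 dd h = Inf {c. AE q in (lborel :: (real \<times> (real^'d)) measure).
       q \<in> {0<..<t1} \<times> Gset dd \<longrightarrow> ennreal (norm (h (fst q) (snd q))) \<le> c}"

definition DxLinf_S :: "real \<Rightarrow> 'd::finite \<Rightarrow> (real \<Rightarrow> real^'d \<Rightarrow> real^'p::finite) \<Rightarrow> ennreal" where
  "DxLinf_S t1 dd h = ess_sup_t t1 (\<lambda>t. lipc (Gset dd) (h t))"

definition Lam :: "real \<Rightarrow> 'd::finite \<Rightarrow> (real \<Rightarrow> real^'d \<Rightarrow> real^'p::finite) \<Rightarrow> (real \<Rightarrow> real^'d \<Rightarrow> real^'p) \<Rightarrow> ennreal" where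
  "Lam t1 dd h1 h2 = 1 + max (DxLinf_S t1 dd h1) (DxLinf_S t1 dd h2)"

definition Rad :: "real \<Rightarrow> 'd::finite \<Rightarrow> (real \<Rightarrow> real^'d \<Rightarrow> real^'p::finite) \<Rightarrow> (real \<Rightarrow> real^'d \<Rightarrow> real^'p) \<Rightarrow> real" where
  "Rad t1 dd h1 h2 = enn2real (max (Linf_S t1 dd h1) (Linf_S t1 dd h2))"

definition L1_h :: "real \<Rightarrow> 'd::finite \<Rightarrow> (real \<Rightarrow> real^'d \<Rightarrow> real^'p::finite) \<Rightarrow> (real \<Rightarrow> real^'d \<Rightarrow> real^'p)
     \<Rightarrow> (real \<Rightarrow> real^'d \<Rightarrow> real^'p \<Rightarrow> real^'d) \<Rightarrow> ennreal" where
  "L1_h t1 dd h1 h2 g = L1_t t1 (\<lambda>t. supn (Dom dd (Rad t1 dd h1 h2)) (bxy g t))"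

definition Linf_h :: "real \<Rightarrow> 'd::finite \<Rightarrow> (real \<Rightarrow> real^'d \<Rightarrow> real^'p::finite) \<Rightarrow> (real \<Rightarrow> real^'d \<Rightarrow> real^'p)
     \<Rightarrow> (real \<Rightarrow> real^'d \<Rightarrow> real^'p \<Rightarrow> real^'d) \<Rightarrow> ennreal" where
  "Linf_h t1 dd h1 h2 g = ess_sup_t t1 (\<lambda>t. supn (Dom dd (Rad t1 dd h1 h2)) (bxy g t))"

definition DL1_h :: "real \<Rightarrow> 'd::finite \<Rightarrow> (real \<Rightarrow> real^'d \<Rightarrow> real^'p::finite) \<Rightarrow> (real \<Rightarrow> real^'d \<Rightarrow> real^'p)
     \<Rightarrow> (real \<Rightarrow> real^'d \<Rightarrow> real^'p \<Rightarrow> real^'d) \<Rightarrow> ennreal" where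
  "DL1_h t1 dd h1 h2 g = L1_t t1 (\<lambda>t. lipc (Dom dd (Rad t1 dd h1 h2)) (bxy g t))"

definition is_sol :: "'d::finite \<Rightarrow> (real \<Rightarrow> real^'d \<Rightarrow> real^'p::finite \<Rightarrow> real^'d) \<Rightarrow> (real \<Rightarrow> real^'d \<Rightarrow> real^'p)
     \<Rightarrow> real \<Rightarrow> real^'d \<Rightarrow> real \<Rightarrow> (real \<Rightarrow> real^'d) \<Rightarrow> bool" where
  "is_sol dd b h t0 x0 tau X \<longleftrightarrow>
     (\<forall>t\<in>{tau..t0}. X t \<in> Gbar dd \<and>
        set_integrable lborel {t..t0} (\<lambda>s. b s (X s) (h s (X s))) \<and>
        X t = x0 - (LINT s:{t..t0}|lborel. b s (X s) (h s (X s))))"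

definition max_sol :: "'d::finite \<Rightarrow> (real \<Rightarrow> real^'d \<Rightarrow> real^'p::finite \<Rightarrow> real^'d) \<Rightarrow> (real \<Rightarrow> real^'d \<Rightarrow> real^'p)
     \<Rightarrow> real \<Rightarrow> real^'d \<Rightarrow> real \<Rightarrow> (real \<Rightarrow> real^'d) \<Rightarrow> bool" where
  "max_sol dd b h t0 x0 tau X \<longleftrightarrow>
     0 \<le> tau \<and> tau \<le> t0 \<and> is_sol dd b h t0 x0 tau X \<and>
     (\<forall>tau' Y. 0 \<le> tau' \<and> tau' < tau \<longrightarrow> \<not> is_sol dd b h t0 x0 tau' Y)"

end

theory Submission
  imports Defs
begin


lemma AE_le_Inf:
  fixes f :: "'a \<Rightarrow> ennreal"
  shows "AE x in M. P x \<longrightarrow> f x \<le> Inf {c. AE x in M. P x \<longrightarrow> f x \<le> c}"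
proof (cases "Inf {c. AE x in M. P x \<longrightarrow> f x \<le> c} = \<infinity>")
  case True show ?thesis unfolding True by simp
next
  case False
  define S where "S = {c. AE x in M. P x \<longrightarrow> f x \<le> c}"
  define c where "c = Inf S"
  have cne: "c \<noteq> \<infinity>" using False unfolding c_def S_def .
  have cfin: "c < \<infinity>" using cne by (simp add: less_top)
  have "\<exists>d\<in>S. d < c + ennreal (1/Suc n)" for n :: nat
  proof -
    have "c + 0 < c + ennreal (1/Suc n)"
      by (subst ennreal_add_left_cancel_less) (use cfin in auto)
    then have "c < c + ennreal (1/Suc n)" by simp
    then show ?thesis unfolding c_def by (simp add: Inf_less_iff)
  qed
  then obtain d where d: "\<And>n. d n \<in> S" "\<And>n. d n < c + ennreal (1/Suc n)" by metis
  have "AE x in M. \<forall>n. P x \<longrightarrow> f x \<le> d n"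
    using d(1) unfolding S_def by (intro AE_all_countable[THEN iffD2] allI) auto
  then have "AE x in M. P x \<longrightarrow> f x \<le> c"
  proof eventually_elim
    case (elim x)
    show ?case
    proof
      assume Px: "P x"
      show "f x \<le> c"
      proof (rule ennreal_le_epsilon)
        fix e :: real assume "0 < e"
        then obtain n :: nat where "inverse (real (Suc n)) < e"
          using reals_Archimedean by blast
        then have n: "1 / Suc n < e" by (simp add: inverse_eq_divide)
        have "f x \<le> d n" using elim Px by auto
        also have "\<dots> \<le> c + ennreal (1/Suc n)" using d(2)[of n] by simp
        also have "\<dots> \<le> c + ennreal e" using n by (intro add_left_mono ennreal_leI) simp
        finally show "f x \<le> c + ennreal e" .
      qed
    qed
  qed
  then show ?thesis unfolding c_def S_def .
qed

lemma ess_sup_t_AE: "AE t in lborel. t \<in> {0<..<t1} \<longrightarrow> F t \<le> ess_sup_t t1 F"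
  unfolding ess_sup_t_def by (rule AE_le_Inf)

lemma ess_sup_t_le: "(AE t in lborel. t \<in> {0<..<t1} \<longrightarrow> F t \<le> c) \<Longrightarrow> ess_sup_t t1 F \<le> c"
  unfolding ess_sup_t_def by (rule Inf_lower) simp

lemma ess_sup_t_mono:
  assumes "\<And>t. F t \<le> G t" shows "ess_sup_t t1 F \<le> ess_sup_t t1 G"
proof (rule ess_sup_t_le)
  show "AE t in lborel. t \<in> {0<..<t1} \<longrightarrow> F t \<le> ess_sup_t t1 G"
    using ess_sup_t_AE[of t1 G] by eventually_elim (use assms order_trans in blast)
qed

lemma supn_le: "z \<in> S \<Longrightarrow> ennreal (norm (f z)) \<le> supn S f"
  unfolding supn_def by (rule SUP_upper)

lemma ennreal_le_fin: "ennreal a \<le> L \<Longrightarrow> L < \<infinity> \<Longrightarrow> 0 \<le> a \<Longrightarrow> a \<le> enn2real L"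
  using enn2real_mono[of "ennreal a" L] by simp

lemma supn_fin: "supn S f < \<infinity> \<Longrightarrow> z \<in> S \<Longrightarrow> norm (f z) \<le> enn2real (supn S f)"
  using supn_le[of z S f] by (intro ennreal_le_fin) auto

lemma supn_mono: "S \<subseteq> T \<Longrightarrow> supn S f \<le> supn T f"
  unfolding supn_def by (rule SUP_subset_mono) auto

lemma lipc_le: "z \<in> S \<Longrightarrow> w \<in> S \<Longrightarrow> z \<noteq> w \<Longrightarrow> ennreal (dist (f z) (f w) / dist z w) \<le> lipc S f"
proof -
  assume a: "z \<in> S" "w \<in> S" "z \<noteq> w"
  have "ennreal (dist (f z) (f w) / dist z w) \<le> (SUP w\<in>S - {z}. ennreal (dist (f z) (f w) / dist z w))"
    using a by (intro SUP_upper) auto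
  also have "\<dots> \<le> lipc S f" unfolding lipc_def using a(1) by (rule SUP_upper)
  finally show ?thesis .
qed

lemma lipc_fin:
  assumes "lipc S f < \<infinity>" "z \<in> S" "w \<in> S"
  shows "dist (f z) (f w) \<le> enn2real (lipc S f) * dist z w"
proof (cases "z = w")
  case True show ?thesis unfolding True by simp
next
  case False
  have "dist (f z) (f w) / dist z w \<le> enn2real (lipc S f)"
    using lipc_le[OF assms(2,3) False, of f] assms(1) by (intro ennreal_le_fin) auto
  then show ?thesis using False by (simp add: divide_le_eq mult.commute)
qed

lemma lipc_mono: "S \<subseteq> T \<Longrightarrow> lipc S f \<le> lipc T f"
  unfolding lipc_def by (intro SUP_subset_mono) auto

lemma lipc_fin_cont:
  assumes "lipc S f < \<infinity>"
  shows "continuous_on S f"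
proof -
  have "lipschitz_on (enn2real (lipc S f)) S f"
    using lipc_fin[OF assms] by (intro lipschitz_onI) auto
  then show ?thesis by (rule lipschitz_on_continuous_on)
qed


lemma supn_dense:
  fixes g :: "'z::metric_space \<Rightarrow> 'v::real_normed_vector"
  assumes "continuous_on S g" "D \<subseteq> S" "S \<subseteq> closure D"
  shows "supn S g = (SUP z\<in>D. ennreal (norm (g z)))"
proof (rule antisym)
  show "supn S g \<le> (SUP z\<in>D. ennreal (norm (g z)))" unfolding supn_def
  proof (rule SUP_least)
    fix z assume "z \<in> S"
    then obtain x where x: "\<forall>n. x n \<in> D" "x \<longlonglongrightarrow> z" using assms(3) closure_sequential by blast
    have "(\<lambda>n. g (x n)) \<longlonglongrightarrow> g z"
      using assms(1) \<open>z \<in> S\<close> x assms(2) unfolding continuous_on_sequentially comp_def by blast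
    then have "(\<lambda>n. ennreal (norm (g (x n)))) \<longlonglongrightarrow> ennreal (norm (g z))"
      by (intro tendsto_ennrealI tendsto_norm)
    then show "ennreal (norm (g z)) \<le> (SUP z\<in>D. ennreal (norm (g z)))"
    proof (rule LIMSEQ_le_const2, intro exI allI impI)
      fix n show "ennreal (norm (g (x n))) \<le> (SUP z\<in>D. ennreal (norm (g z)))"
        using x(1) by (intro SUP_upper) auto
    qed
  qed
  show "(SUP z\<in>D. ennreal (norm (g z))) \<le> supn S g" unfolding supn_def
    using assms(2) by (rule SUP_subset_mono) simp
qed

lemma lipc_dense:
  fixes g :: "'z::metric_space \<Rightarrow> 'v::metric_space"
  assumes "continuous_on S g" "D \<subseteq> S" "S \<subseteq> closure D"
  shows "lipc S g = (SUP z\<in>D. SUP w\<in>D - {z}. ennreal (dist (g z) (g w) / dist z w))"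
proof (rule antisym)
  let ?R = "(SUP z\<in>D. SUP w\<in>D - {z}. ennreal (dist (g z) (g w) / dist z w))"
  show "lipc S g \<le> ?R" unfolding lipc_def
  proof (intro SUP_least)
    fix z w assume z: "z \<in> S" and w: "w \<in> S - {z}"
    obtain x where x: "\<forall>n. x n \<in> D" "x \<longlonglongrightarrow> z" using assms(3) z closure_sequential by blast
    obtain y where y: "\<forall>n. y n \<in> D" "y \<longlonglongrightarrow> w" using assms(3) w closure_sequential by blast
    have gx: "(\<lambda>n. g (x n)) \<longlonglongrightarrow> g z"
      using assms(1) z x assms(2) unfolding continuous_on_sequentially comp_def by blast
    have gy: "(\<lambda>n. g (y n)) \<longlonglongrightarrow> g w"
      using assms(1) w y assms(2) unfolding continuous_on_sequentially comp_def by blast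
    have dxy: "(\<lambda>n. dist (x n) (y n)) \<longlonglongrightarrow> dist z w" using x(2) y(2) by (rule tendsto_dist)
    have dzw: "dist z w > 0" using w by auto
    have lim: "(\<lambda>n. ennreal (dist (g (x n)) (g (y n)) / dist (x n) (y n))) \<longlonglongrightarrow> ennreal (dist (g z) (g w) / dist z w)"
      using dzw by (intro tendsto_ennrealI tendsto_divide tendsto_dist gx gy dxy) auto
    have "eventually (\<lambda>n. dist (x n) (y n) > 0) sequentially"
      using dxy dzw by (rule order_tendstoD)
    then obtain N where N: "\<And>n. n \<ge> N \<Longrightarrow> dist (x n) (y n) > 0" by (auto simp: eventually_sequentially)
    show "ennreal (dist (g z) (g w) / dist z w) \<le> ?R"
    proof (rule LIMSEQ_le_const2[OF lim], intro exI allI impI)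
      fix n assume "n \<ge> N"
      then have "x n \<noteq> y n" using N by fastforce
      then have "ennreal (dist (g (x n)) (g (y n)) / dist (x n) (y n)) \<le> (SUP w\<in>D - {x n}. ennreal (dist (g (x n)) (g w) / dist (x n) w))"
        using y(1) by (intro SUP_upper) auto
      also have "\<dots> \<le> ?R" using x(1) by (intro SUP_upper) auto
      finally show "ennreal (dist (g (x n)) (g (y n)) / dist (x n) (y n)) \<le> ?R" .
    qed
  qed
  show "?R \<le> lipc S g" unfolding lipc_def
    using assms(2) by (intro SUP_subset_mono) auto
qed

lemma meas_slice:
  fixes g :: "real \<Rightarrow> 'z::{metric_space, second_countable_topology} \<Rightarrow> 'v::{metric_space, second_countable_topology}"
  assumes "(\<lambda>(t,z). g t z) \<in> borel_measurable borel"
  shows "(\<lambda>t. g t z) \<in> borel_measurable borel"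
proof -
  have "(\<lambda>t. (t, z)) \<in> borel_measurable borel"
    by (intro borel_measurable_continuous_onI continuous_intros)
  from measurable_compose[OF this assms] show ?thesis by simp
qed

lemma supn_meas:
  fixes g :: "real \<Rightarrow> 'z::{metric_space, second_countable_topology} \<Rightarrow> 'v::{real_normed_vector, second_countable_topology}"
  assumes "(\<lambda>(t,z). g t z) \<in> borel_measurable borel"
  obtains G where "G \<in> borel_measurable borel" "\<And>t. continuous_on S (g t) \<Longrightarrow> supn S (g t) = G t"
proof -
  obtain D where D: "countable D" "D \<subseteq> S" "S \<subseteq> closure D" by (rule separable)
  show ?thesis
  proof
    show "(\<lambda>t. SUP z\<in>D. ennreal (norm (g t z))) \<in> borel_measurable borel"
    proof (intro borel_measurable_SUP D(1))
      fix z have [measurable]: "(\<lambda>t. g t z) \<in> borel_measurable borel" by (rule meas_slice[OF assms])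
      show "(\<lambda>t. ennreal (norm (g t z))) \<in> borel_measurable borel" by measurable
    qed
    show "supn S (g t) = (SUP z\<in>D. ennreal (norm (g t z)))" if "continuous_on S (g t)" for t
      using supn_dense[OF that D(2,3)] .
  qed
qed

lemma lipc_meas:
  fixes g :: "real \<Rightarrow> 'z::{metric_space, second_countable_topology} \<Rightarrow> 'v::{metric_space, second_countable_topology}"
  assumes "(\<lambda>(t,z). g t z) \<in> borel_measurable borel"
  obtains G where "G \<in> borel_measurable borel" "\<And>t. continuous_on S (g t) \<Longrightarrow> lipc S (g t) = G t"
proof -
  obtain D where D: "countable D" "D \<subseteq> S" "S \<subseteq> closure D" by (rule separable)
  show ?thesis
  proof
    show "(\<lambda>t. SUP z\<in>D. SUP w\<in>D - {z}. ennreal (dist (g t z) (g t w) / dist z w)) \<in> borel_measurable borel"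
    proof (intro borel_measurable_SUP countable_Diff D(1))
      fix z w have [measurable]: "(\<lambda>t. g t z) \<in> borel_measurable borel" "(\<lambda>t. g t w) \<in> borel_measurable borel"
        by (rule meas_slice[OF assms])+
      show "(\<lambda>t. ennreal (dist (g t z) (g t w) / dist z w)) \<in> borel_measurable borel" by measurable
    qed
    show "lipc S (g t) = (SUP z\<in>D. SUP w\<in>D - {z}. ennreal (dist (g t z) (g t w) / dist z w))" if "continuous_on S (g t)" for t
      using lipc_dense[OF that D(2,3)] .
  qed
qed


lemma Gset_open: "open (Gset dd)"
proof -
  have "Gset dd = {x. 0 < x $ dd} \<inter> {x. x $ dd < 1}" by (auto simp: Gset_def)
  moreover have "open {x::real^'a. 0 < x $ dd}" "open {x::real^'a. x $ dd < 1}"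
    by (intro open_Collect_less continuous_intros)+
  ultimately show ?thesis by auto
qed

lemma Gset_Gbar: "Gset dd \<subseteq> Gbar dd"
  unfolding Gbar_def by (rule closure_subset)

lemma Gbar_closed: "closed (Gbar dd)"
  unfolding Gbar_def by simp

lemma Gbar_bounds: "x \<in> Gbar dd \<Longrightarrow> 0 \<le> x $ dd \<and> x $ dd \<le> 1"
proof -
  have "closed {x::real^'a. 0 \<le> x $ dd \<and> x $ dd \<le> 1}"
    by (intro closed_Collect_conj closed_Collect_le continuous_intros)
  moreover have "Gset dd \<subseteq> {x. 0 \<le> x $ dd \<and> x $ dd \<le> 1}" by (auto simp: Gset_def)
  ultimately have "Gbar dd \<subseteq> {x. 0 \<le> x $ dd \<and> x $ dd \<le> 1}"
    unfolding Gbar_def by (rule closure_minimal[rotated])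
  then show "x \<in> Gbar dd \<Longrightarrow> 0 \<le> x $ dd \<and> x $ dd \<le> 1" by auto
qed

lemma Gset_ne_interior: "x \<in> Gbar dd \<Longrightarrow> 0 < x $ dd \<Longrightarrow> x $ dd < 1 \<Longrightarrow> x \<in> Gset dd"
  by (simp add: Gset_def)

lemma pair_lborel: "pair_sigma_finite lborel lborel" by unfold_locales

lemma AE_lborel_pair:
  fixes P :: "real \<times> 'b::euclidean_space \<Rightarrow> bool"
  assumes "AE q in lborel. P q"
  shows "AE t in lborel. AE x in lborel. P (t, x)"
proof -
  have "AE q in lborel \<Otimes>\<^sub>M lborel. P q" using assms unfolding lborel_prod .
  then show ?thesis by (rule pair_sigma_finite.AE_pair[OF pair_lborel])
qed

lemma AE_lborel_pairI:
  fixes P :: "real \<times> 'b::euclidean_space \<Rightarrow> bool"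
  assumes "{q. P q} \<in> sets borel" "AE t in lborel. AE x in lborel. P (t, x)"
  shows "AE q in lborel. P q"
proof -
  have "{q. P q} \<in> sets (lborel \<Otimes>\<^sub>M lborel)" unfolding lborel_prod sets_lborel using assms(1) .
  then have "{q \<in> space (lborel \<Otimes>\<^sub>M lborel). P q} \<in> sets (lborel \<Otimes>\<^sub>M lborel)" by (simp add: space_pair_measure)
  then have "AE q in lborel \<Otimes>\<^sub>M lborel. P q"
    using assms(2) by (rule pair_sigma_finite.AE_pair_measure[OF pair_lborel])
  then show ?thesis unfolding lborel_prod .
qed

lemma Linf_S_pointwise:
  fixes k :: "real \<Rightarrow> real^'d::finite \<Rightarrow> real^'p::finite"
  assumes fin: "Linf_S t1 dd k < \<infinity>"
    and cont: "AE t in lborel. t \<in> {0<..<t1} \<longrightarrow> continuous_on (Gbar dd) (k t)"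
  shows "AE t in lborel. t \<in> {0<..<t1} \<longrightarrow> (\<forall>x\<in>Gbar dd. norm (k t x) \<le> enn2real (Linf_S t1 dd k))"
proof -
  define c where "c = enn2real (Linf_S t1 dd k)"
  have cL: "Linf_S t1 dd k = ennreal c" using fin by (simp add: c_def less_top)
  have hL: "AE q in lborel. q \<in> {0<..<t1} \<times> Gset dd \<longrightarrow> ennreal (norm (k (fst q) (snd q))) \<le> Linf_S t1 dd k"
    unfolding Linf_S_def by (rule AE_le_Inf)
  then have "AE t in lborel. AE x in lborel. (t, x) \<in> {0<..<t1} \<times> Gset dd \<longrightarrow> ennreal (norm (k t x)) \<le> ennreal c"
  proof -
    have h: "AE q in lborel. q \<in> {0<..<t1} \<times> Gset dd \<longrightarrow> ennreal (norm (k (fst q) (snd q))) \<le> ennreal c"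
      using hL unfolding cL .
    show ?thesis using AE_lborel_pair[OF h] by simp
  qed
  with cont show ?thesis
  proof eventually_elim
    case (elim t)
    show ?case
    proof
      assume t: "t \<in> {0<..<t1}"
      then have ct: "continuous_on (Gbar dd) (k t)" using elim by auto
      have ae: "AE x in lborel. x \<in> Gset dd \<longrightarrow> norm (k t x) \<le> c"
        using elim(2) by eventually_elim (use t in \<open>auto simp: c_def\<close>)
      have inG: "norm (k t x) \<le> c" if x: "x \<in> Gset dd" for x
      proof (rule ccontr)
        assume "\<not> norm (k t x) \<le> c"
        define U where "U = Gset dd \<inter> k t -` {v. c < norm v}"
        have "open U" unfolding U_def
          by (intro continuous_open_preimage continuous_on_subset[OF ct Gset_Gbar] Gset_open
              open_Collect_less continuous_intros)
        moreover have "AE y \<in> U in lebesgue. y \<in> {}"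
          using ae by (intro AE_completion) (auto simp: U_def elim!: AE_mp)
        moreover have "x \<in> U" using x \<open>\<not> norm (k t x) \<le> c\<close> by (auto simp: U_def)
        ultimately show False using mem_closed_if_AE_lebesgue_open[of U "{}" x] by auto
      qed
      have "k t ` closure (Gset dd) \<subseteq> cball 0 c"
        by (rule image_closure_subset) (use ct inG in \<open>auto simp: Gbar_def\<close>)
      then show "\<forall>x\<in>Gbar dd. norm (k t x) \<le> enn2real (Linf_S t1 dd k)"
        by (auto simp: Gbar_def c_def)
    qed
  qed
qed

lemma Linf_S_le:
  fixes k :: "real \<Rightarrow> real^'d::finite \<Rightarrow> real^'p::finite"
  assumes meas: "(\<lambda>(t,x). k t x) \<in> borel_measurable borel"
    and bnd: "AE t in lborel. t \<in> {0<..<t1} \<longrightarrow> (\<forall>x\<in>Gset dd. norm (k t x) \<le> c)"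
  shows "Linf_S t1 dd k \<le> ennreal c"
  unfolding Linf_S_def
proof (rule Inf_lower, safe)
  define A where "A = {0<..<t1} \<times> Gset dd"
  have mA: "A \<in> sets borel" unfolding A_def by (intro borel_open open_Times Gset_open) auto
  have [measurable]: "(\<lambda>q. k (fst q) (snd q)) \<in> borel_measurable borel"
    using meas by (simp add: case_prod_beta')
  have mg: "(\<lambda>q. norm (k (fst q) (snd q))) \<in> borel_measurable borel" by measurable
  have eq: "{q. q \<in> A \<longrightarrow> norm (k (fst q) (snd q)) \<le> c} = (UNIV - A) \<union> ((\<lambda>q. norm (k (fst q) (snd q))) -` {..c})"
    by auto
  have ms: "{q. q \<in> A \<longrightarrow> norm (k (fst q) (snd q)) \<le> c} \<in> sets borel"
    unfolding eq using mA measurable_sets_borel[OF mg, of "{..c}"] by auto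
  have "AE q in lborel. q \<in> A \<longrightarrow> norm (k (fst q) (snd q)) \<le> c"
  proof (rule AE_lborel_pairI[OF ms])
    show "AE t in lborel. AE x in lborel. (t, x) \<in> A \<longrightarrow> norm (k (fst (t, x)) (snd (t, x))) \<le> c"
      using bnd by eventually_elim (auto simp: A_def)
  qed
  then show "AE q in lborel. q \<in> {0<..<t1} \<times> Gset dd \<longrightarrow> ennreal (norm (k (fst q) (snd q))) \<le> ennreal c"
    by eventually_elim (auto simp: A_def intro: ennreal_leI)
qed

lemma lipschitz_closure:
  fixes f :: "'a::metric_space \<Rightarrow> 'b::metric_space"
  assumes "continuous_on (closure S) f" "\<And>x y. x \<in> S \<Longrightarrow> y \<in> S \<Longrightarrow> dist (f x) (f y) \<le> L * dist x y"
  shows "\<And>x y. x \<in> closure S \<Longrightarrow> y \<in> closure S \<Longrightarrow> dist (f x) (f y) \<le> L * dist x y"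
proof -
  define F where "F = (\<lambda>q. dist (f (fst q)) (f (snd q)) - L * dist (fst q) (snd q))"
  have "continuous_on (closure (S \<times> S)) F"
    unfolding F_def closure_Times
    by (intro continuous_intros continuous_on_compose2[OF assms(1)]) auto
  moreover have "F ` (S \<times> S) \<subseteq> {..0}" using assms(2) by (auto simp: F_def)
  ultimately have "F ` closure (S \<times> S) \<subseteq> {..0}" by (intro image_closure_subset) auto
  then show "dist (f x) (f y) \<le> L * dist x y" if "x \<in> closure S" "y \<in> closure S" for x y
  proof -
    have "F (x, y) \<in> {..0}" using \<open>F ` closure (S \<times> S) \<subseteq> {..0}\<close> that by (auto simp: closure_Times)
    then show ?thesis by (simp add: F_def)
  qed
qed


lemma cube_mono: "A \<le> B \<Longrightarrow> cube A \<subseteq> cube B"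
  unfolding cube_def by (auto intro: order_trans)

lemma Dom_mono: "A \<le> B \<Longrightarrow> Dom dd A \<subseteq> Dom dd B"
  using cube_mono by (auto simp: Dom_def)

lemma norm_in_cube: "norm (y::real^'p::finite) \<le> A \<Longrightarrow> y \<in> cube A"
  unfolding cube_def using component_le_norm_cart order_trans by blast

lemma zero_cube: "0 \<le> A \<Longrightarrow> (0::real^'p::finite) \<in> cube A"
  by (auto simp: cube_def)

lemma ennreal_le_enn2real: "a \<le> b \<Longrightarrow> b < \<infinity> \<Longrightarrow> enn2real a \<le> enn2real b"
  by (rule enn2real_mono) auto

locale hfacts =
  fixes t1 :: real and dd :: "'d::finite" and h :: "real \<Rightarrow> real^'d \<Rightarrow> real^'p::finite"
  assumes hW: "LinfW1inf t1 dd h"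
begin

definition "E = ess_sup_t t1 (\<lambda>t. supn (Gset dd) (h t) + lipc (Gset dd) (h t))"

lemma E_fin: "E < \<infinity>" using hW by (simp add: LinfW1inf_def E_def)

lemma meas: "(\<lambda>(t,x). h t x) \<in> borel_measurable borel" using hW by (simp add: LinfW1inf_def)

lemma AE_E: "AE t in lborel. t \<in> {0<..<t1} \<longrightarrow> supn (Gset dd) (h t) + lipc (Gset dd) (h t) \<le> E"
  unfolding E_def by (rule ess_sup_t_AE)

lemma AE_bound_Gset: "AE t in lborel. t \<in> {0<..<t1} \<longrightarrow> (\<forall>x\<in>Gset dd. norm (h t x) \<le> enn2real E)"
  using AE_E
proof eventually_elim
  case (elim t)
  show ?case
  proof (intro impI ballI)
    fix x assume t: "t \<in> {0<..<t1}" and x: "x \<in> Gset dd"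
    have "ennreal (norm (h t x)) \<le> supn (Gset dd) (h t)" using x by (rule supn_le)
    also have "\<dots> \<le> supn (Gset dd) (h t) + lipc (Gset dd) (h t)" by simp
    also have "\<dots> \<le> E" using elim t by simp
    finally show "norm (h t x) \<le> enn2real E" using E_fin by (intro ennreal_le_fin) auto
  qed
qed

lemma Linf_fin: "Linf_S t1 dd h < \<infinity>"
proof -
  have "Linf_S t1 dd h \<le> ennreal (enn2real E)" by (rule Linf_S_le[OF meas AE_bound_Gset])
  then show ?thesis by (rule le_less_trans) simp
qed

lemma Dx_fin: "DxLinf_S t1 dd h < \<infinity>"
proof -
  have "DxLinf_S t1 dd h \<le> E" unfolding DxLinf_S_def E_def by (rule ess_sup_t_mono) simp
  then show ?thesis by (rule le_less_trans) (rule E_fin)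
qed

lemma AE_cont: "AE t in lborel. t \<in> {0<..<t1} \<longrightarrow> continuous_on (Gbar dd) (h t)"
proof -
  have "AE t in lborel. t \<in> {0<..<t1} \<longrightarrow> supn (Gbar dd) (h t) < \<infinity> \<and> lipc (Gbar dd) (h t) < \<infinity>"
    using hW by (simp add: LinfW1inf_def)
  then show ?thesis by eventually_elim (auto intro: lipc_fin_cont)
qed

lemma AE_bound: "AE t in lborel. t \<in> {0<..<t1} \<longrightarrow> (\<forall>x\<in>Gbar dd. norm (h t x) \<le> enn2real (Linf_S t1 dd h))"
  by (rule Linf_S_pointwise[OF Linf_fin AE_cont])

lemma AE_lip: "AE t in lborel. t \<in> {0<..<t1} \<longrightarrow>
   (\<forall>x\<in>Gbar dd. \<forall>y\<in>Gbar dd. dist (h t x) (h t y) \<le> enn2real (DxLinf_S t1 dd h) * dist x y)"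
proof -
  have "AE t in lborel. t \<in> {0<..<t1} \<longrightarrow> lipc (Gset dd) (h t) \<le> DxLinf_S t1 dd h"
    unfolding DxLinf_S_def by (rule ess_sup_t_AE)
  with AE_cont show ?thesis
  proof eventually_elim
    case (elim t)
    show ?case
    proof (intro impI ballI)
      fix x y assume t: "t \<in> {0<..<t1}" and x: "x \<in> Gbar dd" and y: "y \<in> Gbar dd"
      have le: "lipc (Gset dd) (h t) \<le> DxLinf_S t1 dd h" using elim t by auto
      have fin: "lipc (Gset dd) (h t) < \<infinity>" by (rule le_less_trans[OF le Dx_fin])
      have "dist (h t u) (h t v) \<le> enn2real (DxLinf_S t1 dd h) * dist u v" if "u \<in> Gset dd" "v \<in> Gset dd" for u v
      proof -
        have "dist (h t u) (h t v) \<le> enn2real (lipc (Gset dd) (h t)) * dist u v"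
          by (rule lipc_fin[OF fin that])
        also have "\<dots> \<le> enn2real (DxLinf_S t1 dd h) * dist u v"
          by (intro mult_right_mono enn2real_mono le) (use Dx_fin in auto)
        finally show ?thesis .
      qed
      from lipschitz_closure[of "Gset dd" "h t", OF _ this]
      show "dist (h t x) (h t y) \<le> enn2real (DxLinf_S t1 dd h) * dist x y"
        using elim t x y by (auto simp: Gbar_def)
    qed
  qed
qed

end

lemma hdiff_facts:
  fixes h1 h2 :: "real \<Rightarrow> real^'d::finite \<Rightarrow> real^'p::finite"
  assumes "LinfW1inf t1 dd h1" "LinfW1inf t1 dd h2"
  shows "Linf_S t1 dd (\<lambda>t x. h2 t x - h1 t x) < \<infinity>"
    and "AE t in lborel. t \<in> {0<..<t1} \<longrightarrow> (\<forall>x\<in>Gbar dd. norm (h2 t x - h1 t x) \<le> enn2real (Linf_S t1 dd (\<lambda>t x. h2 t x - h1 t x)))"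
proof -
  interpret H1: hfacts t1 dd h1 by unfold_locales fact
  interpret H2: hfacts t1 dd h2 by unfold_locales fact
  have m: "(\<lambda>(t,x). h2 t x - h1 t x) \<in> borel_measurable borel"
  proof -
    have [measurable]: "(\<lambda>q. h1 (fst q) (snd q)) \<in> borel_measurable borel" "(\<lambda>q. h2 (fst q) (snd q)) \<in> borel_measurable borel"
      using H1.meas H2.meas by (simp_all add: case_prod_beta')
    have "(\<lambda>q. h2 (fst q) (snd q) - h1 (fst q) (snd q)) \<in> borel_measurable borel" by measurable
    then show ?thesis by (simp add: case_prod_beta')
  qed
  have "AE t in lborel. t \<in> {0<..<t1} \<longrightarrow> (\<forall>x\<in>Gset dd. norm (h2 t x - h1 t x) \<le> enn2real H1.E + enn2real H2.E)"
    using H1.AE_bound_Gset H2.AE_bound_Gset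
  proof eventually_elim
    case (elim t)
    show ?case
    proof (intro impI ballI)
      fix x assume t: "t \<in> {0<..<t1}" and x: "x \<in> Gset dd"
      have "norm (h2 t x - h1 t x) \<le> norm (h2 t x) + norm (h1 t x)" by (rule norm_triangle_ineq4)
      also have "\<dots> \<le> enn2real H2.E + enn2real H1.E" using elim t x by (intro add_mono) auto
      finally show "norm (h2 t x - h1 t x) \<le> enn2real H1.E + enn2real H2.E" by simp
    qed
  qed
  then have "Linf_S t1 dd (\<lambda>t x. h2 t x - h1 t x) \<le> ennreal (enn2real H1.E + enn2real H2.E)"
    by (rule Linf_S_le[OF m])
  then show fin: "Linf_S t1 dd (\<lambda>t x. h2 t x - h1 t x) < \<infinity>"
    by (rule le_less_trans) simp
  have "AE t in lborel. t \<in> {0<..<t1} \<longrightarrow> continuous_on (Gbar dd) (\<lambda>x. h2 t x - h1 t x)"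
    using H1.AE_cont H2.AE_cont by eventually_elim (auto intro: continuous_on_diff)
  from Linf_S_pointwise[OF fin this]
  show "AE t in lborel. t \<in> {0<..<t1} \<longrightarrow> (\<forall>x\<in>Gbar dd. norm (h2 t x - h1 t x) \<le> enn2real (Linf_S t1 dd (\<lambda>t x. h2 t x - h1 t x)))" .
qed


lemma LINT_split:
  fixes f :: "real \<Rightarrow> 'b::{banach, second_countable_topology}"
  assumes f: "set_integrable lborel {a..c} f" and "a \<le> b" "b \<le> c"
  shows "(LINT s:{a..c}|lborel. f s) = (LINT s:{a..b}|lborel. f s) + (LINT s:{b..c}|lborel. f s)"
proof -
  have eq: "{a..c} = {a..b} \<union> {b..c}" using assms(2,3) by auto
  have i1: "set_integrable lborel {a..b} f" using f by (rule set_integrable_subset) (use assms in auto)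
  have i2: "set_integrable lborel {b..c} f" using f by (rule set_integrable_subset) (use assms in auto)
  have ae: "AE x in lborel. \<not> (x \<in> {a..b} \<and> x \<in> {b..c})"
    using AE_lborel_singleton[of b] by eventually_elim auto
  show ?thesis unfolding eq by (rule set_integral_Un_AE[OF ae _ _ i1 i2]) auto
qed

lemma LINT_point:
  fixes f :: "real \<Rightarrow> 'b::{banach, second_countable_topology}"
  shows "(LINT s:{a..a}|lborel. f s) = 0"
proof -
  have "AE x in lborel. indicator {a..a} x *\<^sub>R f x = 0"
    using AE_lborel_singleton[of a] by eventually_elim auto
  then show ?thesis unfolding set_lebesgue_integral_def by (rule integral_eq_zero_AE)
qed

lemma LINT_nonneg:
  fixes f :: "real \<Rightarrow> real"
  assumes "\<And>x. x \<in> A \<Longrightarrow> 0 \<le> f x"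
  shows "0 \<le> (LINT s:A|lborel. f s)"
  unfolding set_lebesgue_integral_def
  by (rule integral_nonneg_AE) (use assms in \<open>auto simp: indicator_def\<close>)

lemma LINT_cont:
  fixes f :: "real \<Rightarrow> 'b::euclidean_space"
  assumes f: "set_integrable lborel {a..b} f"
  shows "continuous_on {a..b} (\<lambda>x. LINT s:{x..b}|lborel. f s)"
proof -
  have "f integrable_on {a..b}" using set_borel_integral_eq_integral(1)[OF f] .
  then have c: "continuous_on {a..b} (\<lambda>x. integral {x..b} f)" by (rule indefinite_integral_continuous_1')
  have "(LINT s:{x..b}|lborel. f s) = integral {x..b} f" if "x \<in> {a..b}" for x
  proof -
    have "set_integrable lborel {x..b} f" using f by (rule set_integrable_subset) (use that in auto)
    then show ?thesis by (rule set_borel_integral_eq_integral(2))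
  qed
  then have "continuous_on {a..b} (\<lambda>x. LINT s:{x..b}|lborel. f s) = continuous_on {a..b} (\<lambda>x. integral {x..b} f)"
    by (intro continuous_on_cong) auto
  then show ?thesis using c by simp
qed

lemma set_integrable_mult_cont:
  fixes l u :: "real \<Rightarrow> real"
  assumes l: "set_integrable lborel {a..b} l" and u: "continuous_on {a..b} u"
  shows "set_integrable lborel {a..b} (\<lambda>r. l r * u r)"
proof -
  obtain B where B: "\<And>r. r \<in> {a..b} \<Longrightarrow> norm (u r) \<le> B" "0 \<le> B"
  proof -
    have "compact (u ` {a..b})" by (intro compact_continuous_image u) auto
    then obtain B where "\<forall>x\<in>u ` {a..b}. norm x \<le> B" by (meson bounded_iff compact_imp_bounded)
    then show ?thesis by (intro that[of "max B 0"]) (auto simp: le_max_iff_disj)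
  qed
  have m1: "(\<lambda>x. indicator {a..b} x *\<^sub>R l x) \<in> borel_measurable lborel"
    using l unfolding set_integrable_def by (rule borel_measurable_integrable)
  have "(\<lambda>x. indicator {a..b} x *\<^sub>R u x) \<in> borel_measurable borel"
    by (intro borel_measurable_continuous_on_indicator u) auto
  then have m2: "(\<lambda>x. indicator {a..b} x *\<^sub>R u x) \<in> borel_measurable lborel"
    by (simp add: measurable_lborel1)
  have m: "(\<lambda>x. indicator {a..b} x *\<^sub>R (l x * u x)) \<in> borel_measurable lborel"
  proof -
    have "(\<lambda>x. (indicator {a..b} x *\<^sub>R l x) * (indicator {a..b} x *\<^sub>R u x)) \<in> borel_measurable lborel"
      using m1 m2 by (rule borel_measurable_times)
    moreover have "(\<lambda>x. (indicator {a..b} x *\<^sub>R l x) * (indicator {a..b} x *\<^sub>R u x)) = (\<lambda>x. indicator {a..b} x *\<^sub>R (l x * u x))"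
      by (auto simp: indicator_def)
    ultimately show ?thesis by simp
  qed
  have "integrable lborel (\<lambda>x. B * (indicator {a..b} x *\<^sub>R l x))"
    using l unfolding set_integrable_def by (rule integrable_mult_right)
  then show ?thesis unfolding set_integrable_def
  proof (rule Bochner_Integration.integrable_bound[OF _ m], intro AE_I2)
    fix x show "norm (indicator {a..b} x *\<^sub>R (l x * u x)) \<le> norm (B * (indicator {a..b} x *\<^sub>R l x))"
    proof (cases "x \<in> {a..b}")
      case True
      then have "\<bar>l x\<bar> * \<bar>u x\<bar> \<le> \<bar>l x\<bar> * B" using B(1)[of x] by (intro mult_left_mono) auto
      then show ?thesis using True B(2) by (simp add: abs_mult mult.commute)
    qed simp
  qed
qed

lemma gronwall:
  fixes u l :: "real \<Rightarrow> real"
  assumes Tt0: "T \<le> t0"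
    and l_int: "set_integrable lborel {T..t0} l" and l_nn: "\<And>s. 0 \<le> l s"
    and u_cont: "continuous_on {T..t0} u" and u_nn: "\<And>s. s \<in> {T..t0} \<Longrightarrow> 0 \<le> u s"
    and ineq: "\<And>s. s \<in> {T..t0} \<Longrightarrow> u s \<le> a + \<Lambda> * (LINT r:{s..t0}|lborel. l r * u r)"
    and a: "0 \<le> a" and Lam: "0 \<le> \<Lambda>" and N: "(LINT r:{T..t0}|lborel. l r) \<le> N"
    and s: "s \<in> {T..t0}"
  shows "u s \<le> a * exp (\<Lambda> * N)"
proof -
  define I where "I r = (LINT q:{r..t0}|lborel. l q * u q)" for r
  define K where "K r = (LINT q:{r..t0}|lborel. l q)" for r
  define \<Phi> where "\<Phi> r = a + \<Lambda> * I r" for r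
  have lu_int: "set_integrable lborel {T..t0} (\<lambda>r. l r * u r)"
    by (rule set_integrable_mult_cont[OF l_int u_cont])
  have lu_int': "set_integrable lborel {r..r'} (\<lambda>r. l r * u r)" if "T \<le> r" "r' \<le> t0" for r r'
    using lu_int by (rule set_integrable_subset) (use that in auto)
  have l_int': "set_integrable lborel {r..r'} l" if "T \<le> r" "r' \<le> t0" for r r'
    using l_int by (rule set_integrable_subset) (use that in auto)
  have I_split: "I r = (LINT q:{r..r'}|lborel. l q * u q) + I r'" if "T \<le> r" "r \<le> r'" "r' \<le> t0" for r r'
    unfolding I_def using that by (intro LINT_split lu_int') auto
  have K_split: "K r = (LINT q:{r..r'}|lborel. l q) + K r'" if "T \<le> r" "r \<le> r'" "r' \<le> t0" for r r'
    unfolding K_def using that by (intro LINT_split l_int') auto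
  have I_t0: "I t0 = 0" unfolding I_def by (rule LINT_point)
  have K_t0: "K t0 = 0" unfolding K_def by (rule LINT_point)
  have I_nn: "0 \<le> I r" if "T \<le> r" for r
    unfolding I_def using that by (intro LINT_nonneg mult_nonneg_nonneg l_nn u_nn) auto
  have Phi_nn: "a \<le> \<Phi> r" if "T \<le> r" for r
    unfolding \<Phi>_def using I_nn[OF that] Lam by simp
  have Phi_mono: "\<Phi> r' \<le> \<Phi> r" if "T \<le> r" "r \<le> r'" "r' \<le> t0" for r r'
  proof -
    have "0 \<le> (LINT q:{r..r'}|lborel. l q * u q)"
      using that by (intro LINT_nonneg mult_nonneg_nonneg l_nn u_nn) auto
    then show ?thesis unfolding \<Phi>_def using I_split[OF that] Lam by (simp add: mult_left_mono)
  qed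
  have u_Phi: "u r \<le> \<Phi> r" if "r \<in> {T..t0}" for r
    using ineq[OF that] by (simp add: \<Phi>_def I_def)
  have K_cont: "continuous_on {T..t0} K" unfolding K_def by (rule LINT_cont[OF l_int])
  have key: "\<Phi> r \<le> \<Phi> r' + \<Lambda> * \<Phi> r * (K r - K r')" if "T \<le> r" "r \<le> r'" "r' \<le> t0" for r r'
  proof -
    have "(LINT q:{r..r'}|lborel. l q * u q) \<le> (LINT q:{r..r'}|lborel. l q * \<Phi> r)"
    proof (rule set_integral_mono)
      show "set_integrable lborel {r..r'} (\<lambda>q. l q * u q)" using that by (intro lu_int') auto
      show "set_integrable lborel {r..r'} (\<lambda>q. l q * \<Phi> r)"
        using l_int'[of r r'] that by (intro set_integrable_mult_left) auto
      fix q assume q: "q \<in> {r..r'}"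
      have "u q \<le> \<Phi> q" using q that by (intro u_Phi) auto
      also have "\<dots> \<le> \<Phi> r" using q that by (intro Phi_mono) auto
      finally show "l q * u q \<le> l q * \<Phi> r" by (intro mult_left_mono l_nn)
    qed
    also have "\<dots> = \<Phi> r * (K r - K r')"
      using K_split[OF that] by (simp add: set_integral_mult_left mult.commute)
    finally have "(LINT q:{r..r'}|lborel. l q * u q) \<le> \<Phi> r * (K r - K r')" .
    then have "\<Lambda> * (LINT q:{r..r'}|lborel. l q * u q) \<le> \<Lambda> * (\<Phi> r * (K r - K r'))"
      using Lam by (rule mult_left_mono)
    then show ?thesis unfolding \<Phi>_def using I_split[OF that] by (simp add: algebra_simps)
  qed
  have K_mono: "K r' \<le> K r" if "T \<le> r" "r \<le> r'" "r' \<le> t0" for r r'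
    using K_split[OF that] LINT_nonneg[of "{r..r'}" l] l_nn by simp
  have claim: "\<forall>r. T \<le> r \<and> r \<le> t0 \<and> K r \<le> real n * \<eta> \<longrightarrow> \<Phi> r * (1 - \<Lambda> * \<eta>) ^ n \<le> a"
    if eta: "0 \<le> \<eta>" "\<Lambda> * \<eta> \<le> 1" for \<eta> n
  proof (induction n)
    case 0
    show ?case
    proof (intro allI impI)
      fix r assume r: "T \<le> r \<and> r \<le> t0 \<and> K r \<le> real 0 * \<eta>"
      have "\<Phi> r \<le> \<Phi> t0 + \<Lambda> * \<Phi> r * (K r - K t0)" using r by (intro key) auto
      also have "\<dots> \<le> a"
      proof -
        have "\<Lambda> * \<Phi> r * K r \<le> 0"
          using r Lam Phi_nn[of r] a by (intro mult_nonneg_nonpos) auto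
        then show ?thesis by (simp add: \<Phi>_def I_t0 K_t0)
      qed
      finally show "\<Phi> r * (1 - \<Lambda> * \<eta>) ^ 0 \<le> a" by simp
    qed
  next
    case (Suc n)
    show ?case
    proof (intro allI impI)
      fix r assume r: "T \<le> r \<and> r \<le> t0 \<and> K r \<le> real (Suc n) * \<eta>"
      have q0: "0 \<le> 1 - \<Lambda> * \<eta>" "1 - \<Lambda> * \<eta> \<le> 1" using eta Lam by auto
      have Pr: "0 \<le> \<Phi> r" using Phi_nn[of r] r a by auto
      show "\<Phi> r * (1 - \<Lambda> * \<eta>) ^ Suc n \<le> a"
      proof (cases "K r \<le> real n * \<eta>")
        case True
        then have "\<Phi> r * (1 - \<Lambda> * \<eta>) ^ n \<le> a" using Suc r by auto
        moreover have "\<Phi> r * (1 - \<Lambda> * \<eta>) ^ Suc n \<le> \<Phi> r * (1 - \<Lambda> * \<eta>) ^ n"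
          using q0 Pr by (intro mult_left_mono power_decreasing) auto
        ultimately show ?thesis by linarith
      next
        case False
        have "K t0 \<le> real n * \<eta>" "real n * \<eta> \<le> K r" using False K_t0 eta by auto
        moreover have "continuous_on {r..t0} K" using K_cont by (rule continuous_on_subset) (use r in auto)
        ultimately obtain r' where r': "r \<le> r'" "r' \<le> t0" "K r' = real n * \<eta>"
          using IVT2'[of K t0 "real n * \<eta>" r] r by auto
        have "\<Phi> r \<le> \<Phi> r' + \<Lambda> * \<Phi> r * (K r - K r')" using r r' by (intro key) auto
        also have "\<Lambda> * \<Phi> r * (K r - K r') \<le> \<Lambda> * \<Phi> r * \<eta>"
          using r r' Lam Pr by (intro mult_left_mono) (auto simp: algebra_simps)
        finally have "\<Phi> r * (1 - \<Lambda> * \<eta>) \<le> \<Phi> r'" by (simp add: algebra_simps)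
        then have "\<Phi> r * (1 - \<Lambda> * \<eta>) * (1 - \<Lambda> * \<eta>) ^ n \<le> \<Phi> r' * (1 - \<Lambda> * \<eta>) ^ n"
          using q0 by (intro mult_right_mono zero_le_power) auto
        also have "\<dots> \<le> a" using Suc r r' by auto
        finally show ?thesis by (simp add: mult.assoc)
      qed
    qed
  qed
  have KT: "K T \<le> N" using N by (simp add: K_def)
  have Ks: "K s \<le> N" using K_mono[of T s] s KT by auto
  have KTnn: "0 \<le> K T" unfolding K_def using l_nn by (intro LINT_nonneg) auto
  have Nnn: "0 \<le> N" using KT KTnn by linarith
  have us: "0 \<le> u s" using u_nn s by auto
  obtain n0 :: nat where n0: "\<Lambda> * N \<le> real n0" using real_arch_simple by blast
  have ev: "u s * (1 + (- (\<Lambda> * N)) / real n) ^ n \<le> a" if "n \<ge> Suc n0" for n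
  proof -
    have npos: "0 < real n" using that by auto
    define \<eta> where "\<eta> = N / real n"
    have eta: "0 \<le> \<eta>" using Nnn npos by (simp add: \<eta>_def)
    have "\<Lambda> * \<eta> = (\<Lambda> * N) / real n" by (simp add: \<eta>_def)
    also have "\<dots> \<le> 1" using n0 that npos by (simp add: divide_le_eq)
    finally have eta1: "\<Lambda> * \<eta> \<le> 1" .
    have "K s \<le> real n * \<eta>" using Ks npos by (simp add: \<eta>_def)
    then have "\<Phi> s * (1 - \<Lambda> * \<eta>) ^ n \<le> a" using claim[OF eta eta1, of n] s by auto
    moreover have "u s * (1 - \<Lambda> * \<eta>) ^ n \<le> \<Phi> s * (1 - \<Lambda> * \<eta>) ^ n"
      using u_Phi[OF s] eta1 by (intro mult_right_mono zero_le_power) auto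
    moreover have "1 + (- (\<Lambda> * N)) / real n = 1 - \<Lambda> * \<eta>" by (simp add: \<eta>_def)
    ultimately show ?thesis by simp
  qed
  have lim: "(\<lambda>n. u s * (1 + (- (\<Lambda> * N)) / real n) ^ n) \<longlonglongrightarrow> u s * exp (- (\<Lambda> * N))"
    by (intro tendsto_mult tendsto_const tendsto_exp_limit_sequentially)
  have "u s * exp (- (\<Lambda> * N)) \<le> a"
    by (rule LIMSEQ_le_const2[OF lim]) (use ev in blast)
  then have "u s * exp (- (\<Lambda> * N)) * exp (\<Lambda> * N) \<le> a * exp (\<Lambda> * N)"
    by (intro mult_right_mono) auto
  then show ?thesis by (simp add: exp_minus field_simps)
qed


lemma ennreal_enn2real_le: "ennreal (enn2real x) \<le> x"
  by (cases "x = top") (auto simp: ennreal_enn2real_if)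

locale bfacts =
  fixes t1 :: real and dd :: "'d::finite" and b :: "real \<Rightarrow> real^'d \<Rightarrow> real^'p::finite \<Rightarrow> real^'d"
  assumes bW: "L1W1inf_loc t1 dd b"
begin

lemma measb: "(\<lambda>(t,z). bxy b t z) \<in> borel_measurable borel"
proof -
  have "(\<lambda>(t,z). bxy b t z) = (\<lambda>(t,x,y). b t x y)" by (auto simp: bxy_def fun_eq_iff)
  then show ?thesis using bW by (simp add: L1W1inf_loc_def)
qed

lemma AE_reg:
  assumes "0 \<le> A"
  shows "AE t in lborel. t \<in> {0<..<t1} \<longrightarrow> supn (Dom dd A) (bxy b t) < \<infinity> \<and>
            lipc (Dom dd A) (bxy b t) < \<infinity> \<and> continuous_on (Dom dd A) (bxy b t)"
proof -
  have "A + 1 > 0" using assms by simp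
  then have "AE t in lborel. t \<in> {0<..<t1} \<longrightarrow> supn (Dom dd (A+1)) (bxy b t) < \<infinity> \<and> lipc (Dom dd (A+1)) (bxy b t) < \<infinity>"
    using bW by (simp add: L1W1inf_loc_def)
  then show ?thesis
  proof eventually_elim
    case (elim t)
    have sub: "Dom dd A \<subseteq> Dom dd (A+1)" by (rule Dom_mono) simp
    show ?case
    proof (intro impI conjI)
      assume t: "t \<in> {0<..<t1}"
      have s1: "supn (Dom dd (A+1)) (bxy b t) < \<infinity>" "lipc (Dom dd (A+1)) (bxy b t) < \<infinity>" using elim t by auto
      show "supn (Dom dd A) (bxy b t) < \<infinity>" by (rule le_less_trans[OF supn_mono[OF sub] s1(1)])
      show l: "lipc (Dom dd A) (bxy b t) < \<infinity>" by (rule le_less_trans[OF lipc_mono[OF sub] s1(2)])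
      show "continuous_on (Dom dd A) (bxy b t)" by (rule lipc_fin_cont[OF l])
    qed
  qed
qed

lemma L1_fin:
  assumes "0 \<le> A"
  shows "L1_t t1 (\<lambda>t. supn (Dom dd A) (bxy b t)) < \<infinity>" "L1_t t1 (\<lambda>t. lipc (Dom dd A) (bxy b t)) < \<infinity>"
proof -
  have "A + 1 > 0" using assms by simp
  then have fin: "L1_t t1 (\<lambda>t. supn (Dom dd (A+1)) (bxy b t) + lipc (Dom dd (A+1)) (bxy b t)) < \<infinity>"
    using bW by (simp add: L1W1inf_loc_def)
  have sub: "Dom dd A \<subseteq> Dom dd (A+1)" by (rule Dom_mono) simp
  have "L1_t t1 (\<lambda>t. supn (Dom dd A) (bxy b t)) \<le> L1_t t1 (\<lambda>t. supn (Dom dd (A+1)) (bxy b t) + lipc (Dom dd (A+1)) (bxy b t))"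
    unfolding L1_t_def
  proof (rule nn_integral_mono)
    fix t
    have "supn (Dom dd A) (bxy b t) \<le> supn (Dom dd (A+1)) (bxy b t) + lipc (Dom dd (A+1)) (bxy b t)"
      using supn_mono[OF sub] by (rule order_trans) simp
    then show "indicator {0<..<t1} t * supn (Dom dd A) (bxy b t) \<le> indicator {0<..<t1} t * (supn (Dom dd (A+1)) (bxy b t) + lipc (Dom dd (A+1)) (bxy b t))"
      by (rule mult_left_mono) simp
  qed
  then show "L1_t t1 (\<lambda>t. supn (Dom dd A) (bxy b t)) < \<infinity>" using fin by (rule le_less_trans)
  have "L1_t t1 (\<lambda>t. lipc (Dom dd A) (bxy b t)) \<le> L1_t t1 (\<lambda>t. supn (Dom dd (A+1)) (bxy b t) + lipc (Dom dd (A+1)) (bxy b t))"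
    unfolding L1_t_def
  proof (rule nn_integral_mono)
    fix t
    have "lipc (Dom dd A) (bxy b t) \<le> supn (Dom dd (A+1)) (bxy b t) + lipc (Dom dd (A+1)) (bxy b t)"
      using lipc_mono[OF sub] by (rule order_trans) simp
    then show "indicator {0<..<t1} t * lipc (Dom dd A) (bxy b t) \<le> indicator {0<..<t1} t * (supn (Dom dd (A+1)) (bxy b t) + lipc (Dom dd (A+1)) (bxy b t))"
      by (rule mult_left_mono) simp
  qed
  then show "L1_t t1 (\<lambda>t. lipc (Dom dd A) (bxy b t)) < \<infinity>" using fin by (rule le_less_trans)
qed

lemma neg:
  assumes indep: "bd_indep_y dd b" and bn: "bd_neg t1 dd B b"
  shows "AE t in lborel. t \<in> {0<..<t1} \<longrightarrow> (\<forall>x\<in>Gbar dd. \<forall>y. b t x y $ dd \<le> - B)"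
proof -
  obtain D where D: "countable D" "D \<subseteq> Gset dd" "Gset dd \<subseteq> closure D" by (rule separable)
  have "AE t in lborel. \<forall>x\<in>D. t \<in> {0<..<t1} \<longrightarrow> bdc dd b t x \<le> - B"
    using bn D by (subst AE_ball_countable) (auto simp: bd_neg_def)
  moreover have "AE t in lborel. t \<in> {0<..<t1} \<longrightarrow> supn (Dom dd 1) (bxy b t) < \<infinity> \<and>
            lipc (Dom dd 1) (bxy b t) < \<infinity> \<and> continuous_on (Dom dd 1) (bxy b t)"
    by (rule AE_reg) simp
  ultimately show ?thesis
  proof eventually_elim
    case (elim t)
    show ?case
    proof (intro impI ballI allI)
      fix x y assume t: "t \<in> {0<..<t1}" and x: "x \<in> Gbar dd"
      have cD: "closure D = Gbar dd"
      proof
        show "closure D \<subseteq> Gbar dd" unfolding Gbar_def using D(2) by (rule closure_mono)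
        show "Gbar dd \<subseteq> closure D" unfolding Gbar_def using closure_mono[OF D(3)] by simp
      qed
      have cb: "continuous_on (Dom dd 1) (bxy b t)" using elim t by auto
      have c1: "continuous_on (Gbar dd) (\<lambda>x. bxy b t (x, 0))"
        by (rule continuous_on_compose2[OF cb]) (auto intro!: continuous_intros simp: Dom_def zero_cube)
      have c2: "continuous_on (closure D) (\<lambda>x. bxy b t (x, 0) $ dd)"
        unfolding cD by (intro continuous_intros c1)
      have "(\<lambda>x. bxy b t (x, 0) $ dd) ` D \<subseteq> {..-B}"
        using elim t by (auto simp: bdc_def bxy_def)
      then have "(\<lambda>x. bxy b t (x, 0) $ dd) ` closure D \<subseteq> {..-B}"
        by (intro image_closure_subset c2) auto
      then have "b t x 0 $ dd \<le> - B" using x cD by (auto simp: bxy_def)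
      then show "b t x y $ dd \<le> - B" using indep by (simp add: bd_indep_y_def) metis
    qed
  qed
qed

end

lemma L1_bridge:
  fixes F G :: "real \<Rightarrow> ennreal"
  assumes G: "G \<in> borel_measurable borel" and eq: "AE t in lborel. t \<in> {0<..<t1} \<longrightarrow> F t = G t"
    and fin: "L1_t t1 F < \<infinity>" and s: "0 \<le> s" and t0: "t0 < t1"
  shows "set_integrable lborel {s..t0} (\<lambda>t. enn2real (G t))"
    and "(LINT t:{s..t0}|lborel. enn2real (G t)) \<le> enn2real (L1_t t1 F)"
proof -
  have [measurable]: "G \<in> borel_measurable lborel" using G by (simp add: measurable_lborel1)
  have L: "L1_t t1 F = (\<integral>\<^sup>+ t. indicator {0<..<t1} t * G t \<partial>lborel)"
    unfolding L1_t_def using eq by (intro nn_integral_cong_AE) (auto elim!: AE_mp simp: indicator_def)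
  have ineq: "AE t in lborel. ennreal (norm (indicator {s..t0} t *\<^sub>R enn2real (G t))) \<le> indicator {0<..<t1} t * G t"
    using AE_lborel_singleton[of 0]
  proof eventually_elim
    case (elim t)
    show ?case
    proof (cases "t \<in> {s..t0}")
      case True
      then have "t \<in> {0<..<t1}" using elim s t0 by auto
      then show ?thesis using True by (simp add: ennreal_enn2real_le)
    qed simp
  qed
  have nn: "(\<integral>\<^sup>+ t. ennreal (norm (indicator {s..t0} t *\<^sub>R enn2real (G t))) \<partial>lborel) \<le> L1_t t1 F"
    unfolding L by (rule nn_integral_mono_AE[OF ineq])
  have m: "(\<lambda>t. indicator {s..t0} t *\<^sub>R enn2real (G t)) \<in> borel_measurable lborel" by measurable
  show int: "set_integrable lborel {s..t0} (\<lambda>t. enn2real (G t))"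
    unfolding set_integrable_def using m by (rule integrableI_bounded) (rule le_less_trans[OF nn fin])
  have "(LINT t:{s..t0}|lborel. enn2real (G t)) = enn2real (\<integral>\<^sup>+ t. ennreal (indicator {s..t0} t *\<^sub>R enn2real (G t)) \<partial>lborel)"
    unfolding set_lebesgue_integral_def by (rule integral_eq_nn_integral[OF m]) (auto simp: indicator_def)
  also have "\<dots> \<le> enn2real (L1_t t1 F)"
  proof (rule enn2real_mono)
    show "(\<integral>\<^sup>+ t. ennreal (indicator {s..t0} t *\<^sub>R enn2real (G t)) \<partial>lborel) \<le> L1_t t1 F"
      using nn by (simp add: indicator_def)
    show "L1_t t1 F < top" using fin by simp
  qed
  finally show "(LINT t:{s..t0}|lborel. enn2real (G t)) \<le> enn2real (L1_t t1 F)" .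
qed

lemma sol_cont:
  assumes "is_sol dd b h t0 x0 tau X" "tau \<le> t0"
  shows "continuous_on {tau..t0} X"
proof -
  have int: "set_integrable lborel {tau..t0} (\<lambda>s. b s (X s) (h s (X s)))"
    using assms unfolding is_sol_def by auto
  have "continuous_on {tau..t0} (\<lambda>t. x0 - (LINT s:{t..t0}|lborel. b s (X s) (h s (X s))))"
    by (intro continuous_intros LINT_cont[OF int])
  moreover have "continuous_on {tau..t0} X = continuous_on {tau..t0} (\<lambda>t. x0 - (LINT s:{t..t0}|lborel. b s (X s) (h s (X s))))"
    using assms(1) unfolding is_sol_def by (intro continuous_on_cong) auto
  ultimately show ?thesis by simp
qed


lemma pointwise_est:
  fixes b1 b2 :: "real \<Rightarrow> real^'d::finite \<Rightarrow> real^'p::finite \<Rightarrow> real^'d"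
    and h1 h2 :: "real \<Rightarrow> real^'d \<Rightarrow> real^'p"
  assumes x: "x1 \<in> Gbar dd" "x2 \<in> Gbar dd"
    and hb: "norm (h1 r x1) \<le> R" "norm (h2 r x2) \<le> R"
    and hd: "norm (h2 r x2 - h1 r x2) \<le> eh"
    and hl: "dist (h1 r x2) (h1 r x1) \<le> Lh * dist x2 x1"
    and lf: "lipc (Dom dd R) (bxy b1 r) < \<infinity>"
    and sf: "supn (Dom dd R) (bxy (\<lambda>t x y. b2 t x y - b1 t x y) r) < \<infinity>"
    and Lam: "1 + Lh \<le> \<Lambda>"
  shows "norm (b2 r x2 (h2 r x2) - b1 r x1 (h1 r x1)) \<le>
     enn2real (supn (Dom dd R) (bxy (\<lambda>t x y. b2 t x y - b1 t x y) r))
     + enn2real (lipc (Dom dd R) (bxy b1 r)) * (eh + \<Lambda> * norm (x2 - x1))"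
proof -
  define L where "L = enn2real (lipc (Dom dd R) (bxy b1 r))"
  define S where "S = enn2real (supn (Dom dd R) (bxy (\<lambda>t x y. b2 t x y - b1 t x y) r))"
  have L0: "0 \<le> L" by (simp add: L_def)
  have z1: "(x1, h1 r x1) \<in> Dom dd R" using x hb by (auto simp: Dom_def intro: norm_in_cube)
  have z2: "(x2, h2 r x2) \<in> Dom dd R" using x hb by (auto simp: Dom_def intro: norm_in_cube)
  have d1: "norm (b2 r x2 (h2 r x2) - b1 r x2 (h2 r x2)) \<le> S"
    using supn_fin[OF sf z2] by (simp add: S_def bxy_def)
  have "dist (b1 r x2 (h2 r x2)) (b1 r x1 (h1 r x1)) \<le> L * dist (x2, h2 r x2) (x1, h1 r x1)"
    using lipc_fin[OF lf z2 z1] by (simp add: L_def bxy_def)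
  also have "dist (x2, h2 r x2) (x1, h1 r x1) \<le> dist x2 x1 + dist (h2 r x2) (h1 r x1)"
    unfolding dist_Pair_Pair by (rule sqrt_sum_squares_le_sum) auto
  also have "dist (h2 r x2) (h1 r x1) \<le> dist (h2 r x2) (h1 r x2) + dist (h1 r x2) (h1 r x1)"
    by (rule dist_triangle)
  also have "dist (h2 r x2) (h1 r x2) \<le> eh" using hd by (simp add: dist_norm)
  also have "dist (h1 r x2) (h1 r x1) \<le> Lh * dist x2 x1" by (rule hl)
  finally have d2: "norm (b1 r x2 (h2 r x2) - b1 r x1 (h1 r x1)) \<le> L * (dist x2 x1 + (eh + Lh * dist x2 x1))"
    using L0 by (simp add: dist_norm mult_left_mono)
  have "L * (dist x2 x1 + (eh + Lh * dist x2 x1)) \<le> L * (eh + \<Lambda> * norm (x2 - x1))"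
    using L0 Lam by (intro mult_left_mono) (auto simp: dist_norm algebra_simps intro!: mult_right_mono[of "1 + Lh" \<Lambda>, simplified])
  with d2 have d2': "norm (b1 r x2 (h2 r x2) - b1 r x1 (h1 r x1)) \<le> L * (eh + \<Lambda> * norm (x2 - x1))" by linarith
  have "norm (b2 r x2 (h2 r x2) - b1 r x1 (h1 r x1)) \<le> norm (b2 r x2 (h2 r x2) - b1 r x2 (h2 r x2)) + norm (b1 r x2 (h2 r x2) - b1 r x1 (h1 r x1))"
    using norm_triangle_ineq[of "b2 r x2 (h2 r x2) - b1 r x2 (h2 r x2)" "b1 r x2 (h2 r x2) - b1 r x1 (h1 r x1)"] by simp
  then show ?thesis using d1 d2' by (simp add: L_def S_def)
qed

lemma L1_t_sub:
  fixes F F1 F2 G1 G2 :: "real \<Rightarrow> ennreal"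
  assumes G: "G1 \<in> borel_measurable borel" "G2 \<in> borel_measurable borel"
    and eq: "AE t in lborel. t \<in> {0<..<t1} \<longrightarrow> F1 t = G1 t \<and> F2 t = G2 t"
    and le: "AE t in lborel. t \<in> {0<..<t1} \<longrightarrow> F t \<le> F1 t + F2 t"
    and fin: "L1_t t1 F1 < \<infinity>" "L1_t t1 F2 < \<infinity>"
  shows "L1_t t1 F < \<infinity>"
proof -
  have [measurable]: "G1 \<in> borel_measurable lborel" "G2 \<in> borel_measurable lborel"
    using G by (simp_all add: measurable_lborel1)
  have e1: "L1_t t1 F1 = (\<integral>\<^sup>+ t. indicator {0<..<t1} t * G1 t \<partial>lborel)"
    unfolding L1_t_def using eq by (intro nn_integral_cong_AE) (auto elim!: AE_mp simp: indicator_def)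
  have e2: "L1_t t1 F2 = (\<integral>\<^sup>+ t. indicator {0<..<t1} t * G2 t \<partial>lborel)"
    unfolding L1_t_def using eq by (intro nn_integral_cong_AE) (auto elim!: AE_mp simp: indicator_def)
  have "L1_t t1 F \<le> (\<integral>\<^sup>+ t. indicator {0<..<t1} t * G1 t + indicator {0<..<t1} t * G2 t \<partial>lborel)"
    unfolding L1_t_def
  proof (rule nn_integral_mono_AE)
    show "AE t in lborel. indicator {0<..<t1} t * F t \<le> indicator {0<..<t1} t * G1 t + indicator {0<..<t1} t * G2 t"
      using eq le by eventually_elim (auto simp: indicator_def)
  qed
  also have "\<dots> = L1_t t1 F1 + L1_t t1 F2" unfolding e1 e2 by (rule nn_integral_add) auto
  also have "\<dots> < \<infinity>" using fin by simp
  finally show ?thesis .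
qed


lemma bxy_diff: "bxy (\<lambda>t x y. b2 t x y - b1 t x y) t = (\<lambda>z. bxy b2 t z - bxy b1 t z)"
  by (auto simp: bxy_def fun_eq_iff split: prod.splits)

lemma is_sol_mem: "is_sol dd b h t0 x0 tau X \<Longrightarrow> t \<in> {tau..t0} \<Longrightarrow> X t \<in> Gbar dd"
  unfolding is_sol_def by blast

lemma supn_diff_le: "supn S (\<lambda>z. f z - g z) \<le> supn S f + supn S g"
  unfolding supn_def
proof (rule SUP_least)
  fix z assume z: "z \<in> S"
  have "ennreal (norm (f z - g z)) \<le> ennreal (norm (f z) + norm (g z))"
    by (intro ennreal_leI norm_triangle_ineq4)
  also have "\<dots> = ennreal (norm (f z)) + ennreal (norm (g z))" by (simp add: ennreal_plus)
  also have "\<dots> \<le> (SUP z\<in>S. ennreal (norm (f z))) + (SUP z\<in>S. ennreal (norm (g z)))"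
    using z by (intro add_mono SUP_upper)
  finally show "ennreal (norm (f z - g z)) \<le> (SUP z\<in>S. ennreal (norm (f z))) + (SUP z\<in>S. ennreal (norm (g z)))" .
qed

lemma part1:
  fixes b1 b2 :: "real \<Rightarrow> real^'d::finite \<Rightarrow> real^'p::finite \<Rightarrow> real^'d"
    and h1 h2 :: "real \<Rightarrow> real^'d \<Rightarrow> real^'p"
  assumes bW1: "L1W1inf_loc t1 dd b1" and bW2: "L1W1inf_loc t1 dd b2"
    and hW1: "LinfW1inf t1 dd h1" and hW2: "LinfW1inf t1 dd h2"
    and t0: "t0 < t1"
    and tau1: "0 \<le> tau1" "tau1 \<le> t0" and sol1: "is_sol dd b1 h1 t0 x0 tau1 X1"
    and tau2: "0 \<le> tau2" "tau2 \<le> t0" and sol2: "is_sol dd b2 h2 t0 x0 tau2 X2"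
    and s: "s \<in> {max tau1 tau2..t0}"
  shows "norm (X2 s - X1 s) \<le>
           max 1 (enn2real (DL1_h t1 dd h1 h2 b1))
             * exp (enn2real (Lam t1 dd h1 h2) * enn2real (DL1_h t1 dd h1 h2 b1))
             * (enn2real (Linf_S t1 dd (\<lambda>t x. h2 t x - h1 t x))
                + enn2real (L1_h t1 dd h1 h2 (\<lambda>t x y. b2 t x y - b1 t x y)))"
proof -
  interpret B1: bfacts t1 dd b1 by unfold_locales (rule bW1)
  interpret B2: bfacts t1 dd b2 by unfold_locales (rule bW2)
  interpret H1: hfacts t1 dd h1 by unfold_locales (rule hW1)
  interpret H2: hfacts t1 dd h2 by unfold_locales (rule hW2)
  define R where "R = Rad t1 dd h1 h2"
  have R0: "0 \<le> R" by (simp add: R_def Rad_def)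
  have Rmax_fin: "max (Linf_S t1 dd h1) (Linf_S t1 dd h2) < top"
    using H1.Linf_fin H2.Linf_fin by (auto simp: max_def)
  have R1: "enn2real (Linf_S t1 dd h1) \<le> R" unfolding R_def Rad_def
    by (rule enn2real_mono[OF _ Rmax_fin]) simp
  have R2: "enn2real (Linf_S t1 dd h2) \<le> R" unfolding R_def Rad_def
    by (rule enn2real_mono[OF _ Rmax_fin]) simp
  have measD: "(\<lambda>(t,z). bxy (\<lambda>t x y. b2 t x y - b1 t x y) t z) \<in> borel_measurable borel"
  proof -
    have eq: "(\<lambda>(t,z). bxy (\<lambda>t x y. b2 t x y - b1 t x y) t z) = (\<lambda>q. (\<lambda>(t,z). bxy b2 t z) q - (\<lambda>(t,z). bxy b1 t z) q)"
      by (auto simp: bxy_def fun_eq_iff split: prod.splits)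
    show ?thesis unfolding eq by (rule borel_measurable_diff[OF B2.measb B1.measb])
  qed
  obtain Gd where Gd: "Gd \<in> borel_measurable borel"
    "\<And>t. continuous_on (Dom dd R) (bxy (\<lambda>t x y. b2 t x y - b1 t x y) t) \<Longrightarrow> supn (Dom dd R) (bxy (\<lambda>t x y. b2 t x y - b1 t x y) t) = Gd t"
    using supn_meas[OF measD, of "Dom dd R"] by blast
  obtain Gl where Gl: "Gl \<in> borel_measurable borel"
    "\<And>t. continuous_on (Dom dd R) (bxy b1 t) \<Longrightarrow> lipc (Dom dd R) (bxy b1 t) = Gl t"
    using lipc_meas[OF B1.measb, of "Dom dd R"] by blast
  obtain G1 where G1: "G1 \<in> borel_measurable borel"
    "\<And>t. continuous_on (Dom dd R) (bxy b1 t) \<Longrightarrow> supn (Dom dd R) (bxy b1 t) = G1 t"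
    using supn_meas[OF B1.measb, of "Dom dd R"] by blast
  obtain G2 where G2: "G2 \<in> borel_measurable borel"
    "\<And>t. continuous_on (Dom dd R) (bxy b2 t) \<Longrightarrow> supn (Dom dd R) (bxy b2 t) = G2 t"
    using supn_meas[OF B2.measb, of "Dom dd R"] by blast
  note reg1 = B1.AE_reg[OF R0] and reg2 = B2.AE_reg[OF R0]
  have supnD_le: "supn (Dom dd R) (bxy (\<lambda>t x y. b2 t x y - b1 t x y) t) \<le> supn (Dom dd R) (bxy b2 t) + supn (Dom dd R) (bxy b1 t)" for t
    unfolding bxy_diff by (rule supn_diff_le)
  have contD: "AE t in lborel. t \<in> {0<..<t1} \<longrightarrow> continuous_on (Dom dd R) (bxy (\<lambda>t x y. b2 t x y - b1 t x y) t)"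
    using reg1 reg2 by eventually_elim (auto simp: bxy_diff intro: continuous_on_diff)
  have finD: "L1_t t1 (\<lambda>t. supn (Dom dd R) (bxy (\<lambda>t x y. b2 t x y - b1 t x y) t)) < \<infinity>"
  proof (rule L1_t_sub[OF G2(1) G1(1)])
    show "AE t in lborel. t \<in> {0<..<t1} \<longrightarrow> supn (Dom dd R) (bxy b2 t) = G2 t \<and> supn (Dom dd R) (bxy b1 t) = G1 t"
      using reg1 reg2 by eventually_elim (auto intro: G1(2) G2(2))
    show "AE t in lborel. t \<in> {0<..<t1} \<longrightarrow> supn (Dom dd R) (bxy (\<lambda>t x y. b2 t x y - b1 t x y) t) \<le> supn (Dom dd R) (bxy b2 t) + supn (Dom dd R) (bxy b1 t)"
      using supnD_le by simp
    show "L1_t t1 (\<lambda>t. supn (Dom dd R) (bxy b2 t)) < \<infinity>" by (rule B2.L1_fin(1)[OF R0])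
    show "L1_t t1 (\<lambda>t. supn (Dom dd R) (bxy b1 t)) < \<infinity>" by (rule B1.L1_fin(1)[OF R0])
  qed
  have finL: "L1_t t1 (\<lambda>t. lipc (Dom dd R) (bxy b1 t)) < \<infinity>" by (rule B1.L1_fin(2)[OF R0])
  define eh where "eh = enn2real (Linf_S t1 dd (\<lambda>t x. h2 t x - h1 t x))"
  define eb where "eb = enn2real (L1_h t1 dd h1 h2 (\<lambda>t x y. b2 t x y - b1 t x y))"
  define N where "N = enn2real (DL1_h t1 dd h1 h2 b1)"
  define \<Lambda> where "\<Lambda> = enn2real (Lam t1 dd h1 h2)"
  define Lh where "Lh = enn2real (DxLinf_S t1 dd h1)"
  have eh0: "0 \<le> eh" and eb0: "0 \<le> eb" and N0: "0 \<le> N" and Lh0: "0 \<le> Lh"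
    by (simp_all add: eh_def eb_def N_def Lh_def)
  have Lam_ge: "1 + Lh \<le> \<Lambda>"
  proof -
    have mfin: "max (DxLinf_S t1 dd h1) (DxLinf_S t1 dd h2) < top"
      using H1.Dx_fin H2.Dx_fin by (auto simp: max_def)
    have "\<Lambda> = 1 + enn2real (max (DxLinf_S t1 dd h1) (DxLinf_S t1 dd h2))"
      unfolding \<Lambda>_def Lam_def using mfin by (subst enn2real_plus) auto
    moreover have "Lh \<le> enn2real (max (DxLinf_S t1 dd h1) (DxLinf_S t1 dd h2))"
      unfolding Lh_def by (rule enn2real_mono[OF _ mfin]) simp
    ultimately show ?thesis by simp
  qed
  have Lam0: "0 \<le> \<Lambda>" using Lam_ge Lh0 by simp
  define Db where "Db t = enn2real (Gd t)" for t
  define Lb where "Lb t = enn2real (Gl t)" for t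
  have AEmain: "AE r in lborel. r \<in> {0<..<t1} \<longrightarrow> (\<forall>x1\<in>Gbar dd. \<forall>x2\<in>Gbar dd.
      norm (b2 r x2 (h2 r x2) - b1 r x1 (h1 r x1)) \<le> Db r + Lb r * (eh + \<Lambda> * norm (x2 - x1)))"
    using reg1 reg2 H1.AE_bound H2.AE_bound H1.AE_lip hdiff_facts(2)[OF hW1 hW2]
  proof eventually_elim
    case (elim r)
    show ?case
    proof (intro impI ballI)
      fix x1 x2 assume r: "r \<in> {0<..<t1}" and x: "x1 \<in> Gbar dd" "x2 \<in> Gbar dd"
      have c1: "continuous_on (Dom dd R) (bxy b1 r)" and lf: "lipc (Dom dd R) (bxy b1 r) < \<infinity>"
        and sf1: "supn (Dom dd R) (bxy b1 r) < \<infinity>" and sf2: "supn (Dom dd R) (bxy b2 r) < \<infinity>"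
        and c2: "continuous_on (Dom dd R) (bxy b2 r)" using elim r by auto
      have sf: "supn (Dom dd R) (bxy (\<lambda>t x y. b2 t x y - b1 t x y) r) < \<infinity>"
        using supnD_le[of r] sf1 sf2 by (simp add: le_less_trans)
      have cD: "continuous_on (Dom dd R) (bxy (\<lambda>t x y. b2 t x y - b1 t x y) r)"
        unfolding bxy_diff using c1 c2 by (intro continuous_on_diff)
      have hb1: "norm (h1 r x1) \<le> R" using elim r x R1 by (meson order_trans)
      have hb2: "norm (h2 r x2) \<le> R" using elim r x R2 by (meson order_trans)
      have hd: "norm (h2 r x2 - h1 r x2) \<le> eh" using elim r x by (auto simp: eh_def)
      have hl: "dist (h1 r x2) (h1 r x1) \<le> Lh * dist x2 x1" using elim r x by (auto simp: Lh_def)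
      have "norm (b2 r x2 (h2 r x2) - b1 r x1 (h1 r x1)) \<le>
          enn2real (supn (Dom dd R) (bxy (\<lambda>t x y. b2 t x y - b1 t x y) r))
          + enn2real (lipc (Dom dd R) (bxy b1 r)) * (eh + \<Lambda> * norm (x2 - x1))"
        by (rule pointwise_est[where ?b1.0=b1 and ?b2.0=b2 and ?h1.0=h1 and ?h2.0=h2 and r=r, OF x hb1 hb2 hd hl lf sf Lam_ge])
      then show "norm (b2 r x2 (h2 r x2) - b1 r x1 (h1 r x1)) \<le> Db r + Lb r * (eh + \<Lambda> * norm (x2 - x1))"
        unfolding Db_def Lb_def using Gd(2)[OF cD] Gl(2)[OF c1] by simp
    qed
  qed
  define T where "T = max tau1 tau2"
  have T0: "0 \<le> T" "T \<le> t0" using tau1 tau2 s by (auto simp: T_def)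
  have eqD: "AE t in lborel. t \<in> {0<..<t1} \<longrightarrow> supn (Dom dd R) (bxy (\<lambda>t x y. b2 t x y - b1 t x y) t) = Gd t"
    using contD by eventually_elim (auto intro: Gd(2))
  have eqL: "AE t in lborel. t \<in> {0<..<t1} \<longrightarrow> lipc (Dom dd R) (bxy b1 t) = Gl t"
    using reg1 by eventually_elim (auto intro: Gl(2))
  have ebL: "eb = enn2real (L1_t t1 (\<lambda>t. supn (Dom dd R) (bxy (\<lambda>t x y. b2 t x y - b1 t x y) t)))"
    by (simp add: eb_def L1_h_def R_def)
  have NL: "N = enn2real (L1_t t1 (\<lambda>t. lipc (Dom dd R) (bxy b1 t)))"
    by (simp add: N_def DL1_h_def R_def)
  have Db_int: "set_integrable lborel {q..t0} Db" and Db_le: "(LINT t:{q..t0}|lborel. Db t) \<le> eb" if "0 \<le> q" for q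
    using L1_bridge[OF Gd(1) eqD finD that t0] unfolding Db_def ebL by auto
  have Lb_int: "set_integrable lborel {q..t0} Lb" and Lb_le: "(LINT t:{q..t0}|lborel. Lb t) \<le> N" if "0 \<le> q" for q
    using L1_bridge[OF Gl(1) eqL finL that t0] unfolding Lb_def NL by auto
  define u where "u r = norm (X2 r - X1 r)" for r
  have X1c: "continuous_on {T..t0} X1"
    using sol_cont[OF sol1 tau1(2)] by (rule continuous_on_subset) (auto simp: T_def)
  have X2c: "continuous_on {T..t0} X2"
    using sol_cont[OF sol2 tau2(2)] by (rule continuous_on_subset) (auto simp: T_def)
  have uc: "continuous_on {T..t0} u" unfolding u_def by (intro continuous_intros X1c X2c)
  have ineq: "u q \<le> (eb + eh * N) + \<Lambda> * (LINT r:{q..t0}|lborel. Lb r * u r)" if q: "q \<in> {T..t0}" for q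
  proof -
    define F1 where "F1 r = b1 r (X1 r) (h1 r (X1 r))" for r
    define F2 where "F2 r = b2 r (X2 r) (h2 r (X2 r))" for r
    have q0: "0 \<le> q" using q T0 by auto
    have qt1: "tau1 \<le> q" "tau2 \<le> q" using q by (auto simp: T_def)
    have i1: "set_integrable lborel {q..t0} F1" and e1: "X1 q = x0 - (LINT r:{q..t0}|lborel. F1 r)"
      using sol1 q qt1 by (auto simp: is_sol_def F1_def[abs_def])
    have i2: "set_integrable lborel {q..t0} F2" and e2: "X2 q = x0 - (LINT r:{q..t0}|lborel. F2 r)"
      using sol2 q qt1 by (auto simp: is_sol_def F2_def[abs_def])
    have "X2 q - X1 q = (LINT r:{q..t0}|lborel. F1 r - F2 r)"
      using e1 e2 set_integral_diff(2)[OF i1 i2] by simp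
    then have "u q = norm (LINT r:{q..t0}|lborel. F1 r - F2 r)" by (simp add: u_def)
    also have "\<dots> \<le> (LINT r:{q..t0}|lborel. norm (F1 r - F2 r))"
      by (intro set_integral_norm_bound set_integral_diff(1) i1 i2)
    also have "\<dots> \<le> (LINT r:{q..t0}|lborel. Db r + (eh * Lb r + \<Lambda> * (Lb r * u r)))"
    proof (rule set_integral_mono_AE)
      show "set_integrable lborel {q..t0} (\<lambda>r. norm (F1 r - F2 r))"
        by (intro set_integrable_norm set_integral_diff(1) i1 i2)
      have uc': "continuous_on {q..t0} u" using uc by (rule continuous_on_subset) (use q in auto)
      show "set_integrable lborel {q..t0} (\<lambda>r. Db r + (eh * Lb r + \<Lambda> * (Lb r * u r)))"
        by (intro set_integral_add(1) set_integrable_mult_right Db_int Lb_int q0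
              set_integrable_mult_cont[OF Lb_int[OF q0] uc'])
      show "AE r\<in>{q..t0} in lborel. norm (F1 r - F2 r) \<le> Db r + (eh * Lb r + \<Lambda> * (Lb r * u r))"
        using AEmain AE_lborel_singleton[of 0]
      proof eventually_elim
        case (elim r)
        show ?case
        proof
          assume r: "r \<in> {q..t0}"
          then have r01: "r \<in> {0<..<t1}" using elim q0 t0 by auto
          have x1: "X1 r \<in> Gbar dd" by (rule is_sol_mem[OF sol1]) (use r qt1 in auto)
          have x2: "X2 r \<in> Gbar dd" by (rule is_sol_mem[OF sol2]) (use r qt1 in auto)
          have "norm (F1 r - F2 r) = norm (F2 r - F1 r)" by (rule norm_minus_commute)
          also have "\<dots> \<le> Db r + Lb r * (eh + \<Lambda> * norm (X2 r - X1 r))"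
            using elim(1) r01 x1 x2 by (auto simp: F1_def F2_def)
          finally show "norm (F1 r - F2 r) \<le> Db r + (eh * Lb r + \<Lambda> * (Lb r * u r))"
            by (simp add: u_def algebra_simps)
        qed
      qed
    qed
    also have "\<dots> = (LINT r:{q..t0}|lborel. Db r) + eh * (LINT r:{q..t0}|lborel. Lb r) + \<Lambda> * (LINT r:{q..t0}|lborel. Lb r * u r)"
    proof -
      have uc': "continuous_on {q..t0} u" using uc by (rule continuous_on_subset) (use q in auto)
      have iLu: "set_integrable lborel {q..t0} (\<lambda>r. Lb r * u r)" by (rule set_integrable_mult_cont[OF Lb_int[OF q0] uc'])
      have iA: "set_integrable lborel {q..t0} (\<lambda>r. eh * Lb r)" by (intro set_integrable_mult_right Lb_int q0)
      have iB: "set_integrable lborel {q..t0} (\<lambda>r. \<Lambda> * (Lb r * u r))" by (intro set_integrable_mult_right iLu)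
      have "(LINT r:{q..t0}|lborel. Db r + (eh * Lb r + \<Lambda> * (Lb r * u r))) =
            (LINT r:{q..t0}|lborel. Db r) + (LINT r:{q..t0}|lborel. eh * Lb r + \<Lambda> * (Lb r * u r))"
        by (rule set_integral_add(2)[OF Db_int[OF q0] set_integral_add(1)[OF iA iB]])
      also have "(LINT r:{q..t0}|lborel. eh * Lb r + \<Lambda> * (Lb r * u r)) =
            (LINT r:{q..t0}|lborel. eh * Lb r) + (LINT r:{q..t0}|lborel. \<Lambda> * (Lb r * u r))"
        by (rule set_integral_add(2)[OF iA iB])
      finally show ?thesis by (simp add: set_integral_mult_right add.assoc)
    qed
    also have "\<dots> \<le> eb + eh * N + \<Lambda> * (LINT r:{q..t0}|lborel. Lb r * u r)"
      using Db_le[OF q0] Lb_le[OF q0] eh0 by (simp add: mult_left_mono add_mono)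
    finally show ?thesis by simp
  qed
  have Lb_nn: "0 \<le> Lb r" for r by (simp add: Lb_def)
  have u_nn: "0 \<le> u r" for r by (simp add: u_def)
  have sT: "s \<in> {T..t0}" using s by (simp add: T_def)
  have "u s \<le> (eb + eh * N) * exp (\<Lambda> * N)"
    by (rule gronwall[OF T0(2) Lb_int[OF T0(1)] Lb_nn uc u_nn ineq _ Lam0 Lb_le[OF T0(1)] sT])
       (use eb0 eh0 N0 in auto)
  also have "\<dots> \<le> max 1 N * exp (\<Lambda> * N) * (eh + eb)"
  proof -
    have "eb + eh * N \<le> max 1 N * (eh + eb)"
    proof -
      have "eb \<le> max 1 N * eb" using eb0 by (simp add: mult_right_mono[of 1 "max 1 N" eb, simplified])
      moreover have "eh * N \<le> eh * max 1 N" using eh0 by (intro mult_left_mono) auto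
      ultimately show ?thesis by (simp add: algebra_simps)
    qed
    then show ?thesis by (simp add: mult_right_mono mult.commute mult.left_commute)
  qed
  finally show ?thesis by (simp add: u_def eh_def eb_def N_def \<Lambda>_def)
qed


lemma is_sol_mem': "is_sol dd b h t0 x0 tau X \<Longrightarrow> t \<in> {tau..t0} \<Longrightarrow> X t \<in> Gbar dd"
  unfolding is_sol_def by blast

lemma is_sol_int: "is_sol dd b h t0 x0 tau X \<Longrightarrow> t \<in> {tau..t0} \<Longrightarrow> set_integrable lborel {t..t0} (\<lambda>s. b s (X s) (h s (X s)))"
  unfolding is_sol_def by blast

lemma is_sol_eq: "is_sol dd b h t0 x0 tau X \<Longrightarrow> t \<in> {tau..t0} \<Longrightarrow> X t = x0 - (LINT s:{t..t0}|lborel. b s (X s) (h s (X s)))"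
  unfolding is_sol_def by blast

lemma set_int_cong:
  "(\<And>x. x \<in> A \<Longrightarrow> f x = g x) \<Longrightarrow> (LINT x:A|M. f x) = (LINT x:A|M. g x)"
  unfolding set_lebesgue_integral_def by (intro Bochner_Integration.integral_cong) (auto simp: indicator_def)

lemma const_int: "set_integrable lborel {a..b::real} (\<lambda>_. c::real)"
  unfolding set_integrable_def
proof (rule integrableI_bounded_set_indicator[where B="\<bar>c\<bar>"])
  show "{a..b} \<in> sets lborel" by (simp add: borel_closed)
  show "emeasure lborel {a..b} < \<infinity>" by (simp add: emeasure_lborel_Icc_eq)
qed auto

lemma LINT_const: "a \<le> b \<Longrightarrow> (LINT x:{a..b::real}|lborel. (c::real)) = (b - a) * c"
  by (subst set_integral_const) (auto simp: emeasure_lborel_Icc_eq measure_lborel_Icc)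

lemma LINT_comp:
  fixes f :: "real \<Rightarrow> real^'n::finite"
  assumes "set_integrable lborel A f"
  shows "(LINT x:A|lborel. f x) $ i = (LINT x:A|lborel. f x $ i)"
    and "set_integrable lborel A (\<lambda>x. f x $ i)"
proof -
  have "integrable lborel (\<lambda>x. indicator A x *\<^sub>R f x)" using assms by (simp add: set_integrable_def)
  then have "integrable lborel (\<lambda>x. (indicator A x *\<^sub>R f x) \<bullet> axis i 1)" by (rule integrable_inner_left)
  moreover have "(\<lambda>x. (indicator A x *\<^sub>R f x) \<bullet> axis i 1) = (\<lambda>x. indicator A x *\<^sub>R (f x $ i))"
    by (simp add: cart_eq_inner_axis)
  ultimately show "set_integrable lborel A (\<lambda>x. f x $ i)" by (simp add: set_integrable_def)
  have "(LINT x:A|lborel. f x) $ i = (LINT x|lborel. (indicator A x *\<^sub>R f x) \<bullet> axis i 1)"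
    unfolding set_lebesgue_integral_def cart_eq_inner_axis
    by (rule integral_inner_left[symmetric]) (use assms in \<open>simp add: set_integrable_def\<close>)
  also have "\<dots> = (LINT x:A|lborel. f x $ i)"
    unfolding set_lebesgue_integral_def by (simp add: cart_eq_inner_axis)
  finally show "(LINT x:A|lborel. f x) $ i = (LINT x:A|lborel. f x $ i)" .
qed

lemma sol_diff:
  assumes sol: "is_sol dd b h t0 x0 tau X" and s: "tau \<le> s" "s \<le> s'" "s' \<le> t0"
  shows "X s = X s' - (LINT r:{s..s'}|lborel. b r (X r) (h r (X r)))"
    and "set_integrable lborel {s..s'} (\<lambda>r. b r (X r) (h r (X r)))"
proof -
  have i: "set_integrable lborel {s..t0} (\<lambda>r. b r (X r) (h r (X r)))" by (rule is_sol_int[OF sol]) (use s in auto)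
  show "set_integrable lborel {s..s'} (\<lambda>r. b r (X r) (h r (X r)))"
    using i by (rule set_integrable_subset) (use s in auto)
  have "X s = x0 - (LINT r:{s..t0}|lborel. b r (X r) (h r (X r)))" by (rule is_sol_eq[OF sol]) (use s in auto)
  also have "\<dots> = x0 - ((LINT r:{s..s'}|lborel. b r (X r) (h r (X r))) + (LINT r:{s'..t0}|lborel. b r (X r) (h r (X r))))"
    using LINT_split[OF i s(2,3)] by simp
  finally have e1: "X s = x0 - ((LINT r:{s..s'}|lborel. b r (X r) (h r (X r))) + (LINT r:{s'..t0}|lborel. b r (X r) (h r (X r))))" .
  have e2: "X s' = x0 - (LINT r:{s'..t0}|lborel. b r (X r) (h r (X r)))" by (rule is_sol_eq[OF sol]) (use s in auto)
  show "X s = X s' - (LINT r:{s..s'}|lborel. b r (X r) (h r (X r)))" unfolding e1 e2 by (simp add: algebra_simps)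
qed

lemma growth:
  assumes sol: "is_sol dd b h t0 x0 tau X"
    and neg: "AE t in lborel. t \<in> {0<..<t1} \<longrightarrow> (\<forall>x\<in>Gbar dd. \<forall>y. b t x y $ dd \<le> - B)"
    and s: "0 \<le> tau" "tau \<le> s" "s \<le> s'" "s' \<le> t0" and t0: "t0 < t1"
  shows "X s' $ dd + B * (s' - s) \<le> X s $ dd"
proof -
  note d = sol_diff[OF sol s(2,3,4)]
  have "(LINT r:{s..s'}|lborel. b r (X r) (h r (X r)) $ dd) \<le> (LINT r:{s..s'}|lborel. - B)"
  proof (rule set_integral_mono_AE)
    show "set_integrable lborel {s..s'} (\<lambda>r. b r (X r) (h r (X r)) $ dd)" by (rule LINT_comp(2)[OF d(2)])
    show "set_integrable lborel {s..s'} (\<lambda>r. - B)" by (rule const_int)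
    show "AE r\<in>{s..s'} in lborel. b r (X r) (h r (X r)) $ dd \<le> - B"
      using neg AE_lborel_singleton[of 0]
    proof eventually_elim
      case (elim r)
      show ?case
      proof
        assume r: "r \<in> {s..s'}"
        then have "r \<in> {0<..<t1}" using elim s t0 by auto
        moreover have "X r \<in> Gbar dd" by (rule is_sol_mem'[OF sol]) (use r s in auto)
        ultimately show "b r (X r) (h r (X r)) $ dd \<le> - B" using elim by auto
      qed
    qed
  qed
  also have "\<dots> = (s' - s) * (- B)" using s by (intro LINT_const) auto
  finally have "(LINT r:{s..s'}|lborel. b r (X r) (h r (X r))) $ dd \<le> - B * (s' - s)"
    using LINT_comp(1)[OF d(2)] by (simp add: mult.commute)
  then show ?thesis using d(1) by simp
qed

lemma speed:
  assumes sol: "is_sol dd b h t0 x0 tau X"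
    and bnd: "AE t in lborel. t \<in> {0<..<t1} \<longrightarrow> (\<forall>x\<in>Gbar dd. norm (b t x (h t x)) \<le> V)"
    and s: "0 \<le> tau" "tau \<le> s" "s \<le> s'" "s' \<le> t0" and t0: "t0 < t1"
  shows "norm (X s - X s') \<le> V * (s' - s)"
proof -
  note d = sol_diff[OF sol s(2,3,4)]
  have "norm (X s - X s') = norm (LINT r:{s..s'}|lborel. b r (X r) (h r (X r)))" using d(1) by simp
  also have "\<dots> \<le> (LINT r:{s..s'}|lborel. norm (b r (X r) (h r (X r))))"
    by (rule set_integral_norm_bound[OF d(2)])
  also have "\<dots> \<le> (LINT r:{s..s'}|lborel. V)"
  proof (rule set_integral_mono_AE)
    show "set_integrable lborel {s..s'} (\<lambda>r. norm (b r (X r) (h r (X r))))" by (rule set_integrable_norm[OF d(2)])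
    show "set_integrable lborel {s..s'} (\<lambda>r. V)" by (rule const_int)
    show "AE r\<in>{s..s'} in lborel. norm (b r (X r) (h r (X r))) \<le> V"
      using bnd AE_lborel_singleton[of 0]
    proof eventually_elim
      case (elim r)
      show ?case
      proof
        assume r: "r \<in> {s..s'}"
        then have "r \<in> {0<..<t1}" using elim s t0 by auto
        moreover have "X r \<in> Gbar dd" by (rule is_sol_mem'[OF sol]) (use r s in auto)
        ultimately show "norm (b r (X r) (h r (X r))) \<le> V" using elim by auto
      qed
    qed
  qed
  also have "\<dots> = (s' - s) * V" using s by (intro LINT_const) auto
  finally show ?thesis by (simp add: mult.commute)
qed

lemma speed_bound:
  fixes b :: "real \<Rightarrow> real^'d::finite \<Rightarrow> real^'p::finite \<Rightarrow> real^'d"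
  assumes hW: "LinfW1inf t1 dd h" and fin: "Linf_h t1 dd h h b < \<infinity>"
  shows "AE t in lborel. t \<in> {0<..<t1} \<longrightarrow> (\<forall>x\<in>Gbar dd. norm (b t x (h t x)) \<le> enn2real (Linf_h t1 dd h h b))"
proof -
  interpret H: hfacts t1 dd h by unfold_locales (rule hW)
  have R: "Rad t1 dd h h = enn2real (Linf_S t1 dd h)" by (simp add: Rad_def)
  have "AE t in lborel. t \<in> {0<..<t1} \<longrightarrow> supn (Dom dd (Rad t1 dd h h)) (bxy b t) \<le> Linf_h t1 dd h h b"
    unfolding Linf_h_def by (rule ess_sup_t_AE)
  with H.AE_bound show ?thesis
  proof eventually_elim
    case (elim t)
    show ?case
    proof (intro impI ballI)
      fix x assume t: "t \<in> {0<..<t1}" and x: "x \<in> Gbar dd"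
      have "(x, h t x) \<in> Dom dd (Rad t1 dd h h)" using elim t x unfolding R
        by (auto simp: Dom_def intro: norm_in_cube)
      then have "ennreal (norm (bxy b t (x, h t x))) \<le> supn (Dom dd (Rad t1 dd h h)) (bxy b t)" by (rule supn_le)
      also have "\<dots> \<le> Linf_h t1 dd h h b" using elim t by auto
      finally show "norm (b t x (h t x)) \<le> enn2real (Linf_h t1 dd h h b)"
        using fin by (intro ennreal_le_fin) (auto simp: bxy_def)
    qed
  qed
qed


lemma meas_comp:
  fixes b :: "real \<Rightarrow> real^'d::finite \<Rightarrow> real^'p::finite \<Rightarrow> real^'d" and h :: "real \<Rightarrow> real^'d \<Rightarrow> real^'p"
  assumes b: "(\<lambda>(t,x,y). b t x y) \<in> borel_measurable borel" and h: "(\<lambda>(t,x). h t x) \<in> borel_measurable borel"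
    and q: "continuous_on UNIV q"
  shows "(\<lambda>s. b s (q s) (h s (q s))) \<in> borel_measurable borel"
proof -
  have qm: "q \<in> borel_measurable borel" by (rule borel_measurable_continuous_onI[OF q])
  have 1: "(\<lambda>s. (s, q s)) \<in> borel_measurable borel"
    by (intro borel_measurable_continuous_onI continuous_on_Pair continuous_on_id q)
  have 2: "(\<lambda>s. h s (q s)) \<in> borel_measurable borel" using measurable_compose[OF 1 h] by simp
  have 3: "(\<lambda>s. (q s, h s (q s))) \<in> borel_measurable borel"
    using measurable_Pair[OF qm 2] unfolding borel_prod .
  have 4: "(\<lambda>s. (s, (q s, h s (q s)))) \<in> borel_measurable borel"
    using measurable_Pair[OF measurable_ident_sets[OF refl] 3] unfolding borel_prod by simp
  show ?thesis using measurable_compose[OF 4 b] by simp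
qed

lemma LINT_point':
  fixes f :: "real \<Rightarrow> 'b::{banach, second_countable_topology}"
  shows "(LINT s:{a}|lborel. f s) = 0"
  using LINT_point[of a f] by simp

lemma int_bound_lborel:
  fixes f :: "real \<Rightarrow> 'b::{banach, second_countable_topology}"
  assumes m: "f \<in> borel_measurable borel" and g: "set_integrable lborel {a..b} g"
    and bnd: "AE s\<in>{a..b} in lborel. norm (f s) \<le> g s"
  shows "set_integrable lborel {a..b} f"
  unfolding set_integrable_def
proof (rule Bochner_Integration.integrable_bound)
  show "integrable lborel (\<lambda>x. indicator {a..b} x *\<^sub>R g x)" using g by (simp add: set_integrable_def)
  have "f \<in> borel_measurable lborel" using m by (simp add: measurable_lborel1)
  then show "(\<lambda>x. indicator {a..b} x *\<^sub>R f x) \<in> borel_measurable lborel"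
    by (intro borel_measurable_scaleR borel_measurable_indicator) auto
  show "AE x in lborel. norm (indicator {a..b} x *\<^sub>R f x) \<le> norm (indicator {a..b} x *\<^sub>R g x)"
    using bnd by eventually_elim (auto simp: indicator_def)
qed

lemma exit_lemma:
  fixes b :: "real \<Rightarrow> real^'d::finite \<Rightarrow> real^'p::finite \<Rightarrow> real^'d" and h :: "real \<Rightarrow> real^'d \<Rightarrow> real^'p"
  assumes bW: "L1W1inf_loc t1 dd b" and hW: "LinfW1inf t1 dd h"
    and neg: "AE t in lborel. t \<in> {0<..<t1} \<longrightarrow> (\<forall>x\<in>Gbar dd. \<forall>y. b t x y $ dd \<le> - B)" and B: "0 < B"
    and t0: "t0 < t1" and x0: "x0 \<in> Gset dd"
    and ms: "max_sol dd b h t0 x0 tau X" and tau: "0 < tau"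
  shows "X tau $ dd = 1"
proof (rule ccontr)
  assume ne: "X tau $ dd \<noteq> 1"
  interpret BF: bfacts t1 dd b by unfold_locales (rule bW)
  interpret H: hfacts t1 dd h by unfold_locales (rule hW)
  have taut0: "tau \<le> t0" and sol: "is_sol dd b h t0 x0 tau X"
    and maxi: "\<And>tau' Y. 0 \<le> tau' \<Longrightarrow> tau' < tau \<Longrightarrow> \<not> is_sol dd b h t0 x0 tau' Y"
    using ms unfolding max_sol_def by auto
  define z where "z = X tau"
  have zG: "z \<in> Gbar dd" unfolding z_def by (rule is_sol_mem'[OF sol]) (use taut0 in auto)
  have z1: "z $ dd < 1" using Gbar_bounds[OF zG] ne by (auto simp: z_def)
  have Xt0: "X t0 = x0"
  proof -
    have "X t0 = x0 - (LINT s:{t0..t0}|lborel. b s (X s) (h s (X s)))"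
      by (rule is_sol_eq[OF sol]) (use taut0 in auto)
    then show ?thesis by (simp only: LINT_point) simp
  qed
  have "X t0 $ dd + B * (t0 - tau) \<le> X tau $ dd"
    by (rule growth[OF sol neg]) (use tau taut0 t0 in auto)
  then have "x0 $ dd \<le> z $ dd" using B taut0 Xt0 by (simp add: z_def) (smt (verit) mult_nonneg_nonneg)
  then have z0: "0 < z $ dd" using x0 by (auto simp: Gset_def)
  have zS: "z \<in> Gset dd" using z0 z1 by (simp add: Gset_def)
  obtain \<rho> where rho: "0 < \<rho>" "cball z \<rho> \<subseteq> Gset dd"
    using Gset_open zS open_contains_cball by blast
  define A where "A = enn2real (Linf_S t1 dd h)"
  have A0: "0 \<le> A" by (simp add: A_def)
  define Lh where "Lh = enn2real (DxLinf_S t1 dd h)"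
  have Lh0: "0 \<le> Lh" by (simp add: Lh_def)
  obtain Sb where Sb: "Sb \<in> borel_measurable borel" "\<And>t. continuous_on (Dom dd A) (bxy b t) \<Longrightarrow> supn (Dom dd A) (bxy b t) = Sb t"
    using supn_meas[OF BF.measb, of "Dom dd A"] by blast
  obtain Lb where Lb: "Lb \<in> borel_measurable borel" "\<And>t. continuous_on (Dom dd A) (bxy b t) \<Longrightarrow> lipc (Dom dd A) (bxy b t) = Lb t"
    using lipc_meas[OF BF.measb, of "Dom dd A"] by blast
  note reg = BF.AE_reg[OF A0]
  have eqS: "AE t in lborel. t \<in> {0<..<t1} \<longrightarrow> supn (Dom dd A) (bxy b t) = Sb t"
    using reg by eventually_elim (auto intro: Sb(2))
  have eqL: "AE t in lborel. t \<in> {0<..<t1} \<longrightarrow> lipc (Dom dd A) (bxy b t) = Lb t"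
    using reg by eventually_elim (auto intro: Lb(2))
  define sb where "sb t = enn2real (Sb t)" for t
  define lb where "lb t = enn2real (Lb t)" for t
  have sb0: "0 \<le> sb t" for t by (simp add: sb_def)
  have lb0: "0 \<le> lb t" for t by (simp add: lb_def)
  have sb_int: "set_integrable lborel {0..t0} sb"
    using L1_bridge(1)[OF Sb(1) eqS BF.L1_fin(1)[OF A0] order.refl t0] by (simp add: sb_def[abs_def])
  have lb_int: "set_integrable lborel {0..t0} lb"
    using L1_bridge(1)[OF Lb(1) eqL BF.L1_fin(2)[OF A0] order.refl t0] by (simp add: lb_def[abs_def])
  define F where "F s x = b s x (h s x)" for s x
  have AEF: "AE s in lborel. s \<in> {0<..<t1} \<longrightarrow> (\<forall>x\<in>Gbar dd. norm (F s x) \<le> sb s) \<and>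
       (\<forall>x\<in>Gbar dd. \<forall>x'\<in>Gbar dd. norm (F s x - F s x') \<le> lb s * (1 + Lh) * norm (x - x'))"
    using reg H.AE_bound H.AE_lip
  proof eventually_elim
    case (elim s)
    show ?case
    proof (intro impI conjI ballI)
      assume s: "s \<in> {0<..<t1}"
      have c: "continuous_on (Dom dd A) (bxy b s)" and sf: "supn (Dom dd A) (bxy b s) < \<infinity>"
        and lf: "lipc (Dom dd A) (bxy b s) < \<infinity>" using elim s by auto
      have inD: "(x, h s x) \<in> Dom dd A" if "x \<in> Gbar dd" for x
        using elim s that by (auto simp: Dom_def A_def intro: norm_in_cube)
      fix x assume x: "x \<in> Gbar dd"
      show "norm (F s x) \<le> sb s"
        using supn_fin[OF sf inD[OF x]] Sb(2)[OF c] by (simp add: F_def sb_def bxy_def)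
    next
      fix x x' assume s: "s \<in> {0<..<t1}" and x: "x \<in> Gbar dd" and x': "x' \<in> Gbar dd"
      have c: "continuous_on (Dom dd A) (bxy b s)"
        and lf: "lipc (Dom dd A) (bxy b s) < \<infinity>" using elim s by auto
      have inD: "(y, h s y) \<in> Dom dd A" if "y \<in> Gbar dd" for y
        using elim s that by (auto simp: Dom_def A_def intro: norm_in_cube)
      have A1: "dist (F s x) (F s x') \<le> lb s * dist (x, h s x) (x', h s x')"
        using lipc_fin[OF lf inD[OF x] inD[OF x']] Lb(2)[OF c] by (simp add: F_def lb_def bxy_def)
      have "dist (x, h s x) (x', h s x') \<le> dist x x' + dist (h s x) (h s x')"
        unfolding dist_Pair_Pair by (rule sqrt_sum_squares_le_sum) auto
      also have "dist (h s x) (h s x') \<le> Lh * dist x x'" using elim s x x' by (auto simp: Lh_def)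
      finally have A2: "dist (x, h s x) (x', h s x') \<le> dist x x' + Lh * dist x x'" by simp
      have "dist (F s x) (F s x') \<le> lb s * (dist x x' + Lh * dist x x')"
        by (rule order_trans[OF A1 mult_left_mono[OF A2 lb0]])
      then show "norm (F s x - F s x') \<le> lb s * (1 + Lh) * norm (x - x')"
        by (simp add: dist_norm algebra_simps)
    qed
  qed
  define k where "k t = sb t / \<rho> + 2 * (1 + Lh) * lb t" for t
  have k_int: "set_integrable lborel {0..tau} k"
  proof -
    have "set_integrable lborel {0..tau} sb" using sb_int by (rule set_integrable_subset) (use taut0 in auto)
    moreover have "set_integrable lborel {0..tau} lb" using lb_int by (rule set_integrable_subset) (use taut0 in auto)
    ultimately have "set_integrable lborel {0..tau} sb \<and> set_integrable lborel {0..tau} lb" by simp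
    then have "set_integrable lborel {0..tau} sb" "set_integrable lborel {0..tau} lb" by auto
    then show ?thesis unfolding k_def[abs_def]
      by (intro set_integral_add(1) set_integrable_divide set_integrable_mult_right)
  qed
  have Kc: "continuous_on {0..tau} (\<lambda>r. LINT s:{r..tau}|lborel. k s)" by (rule LINT_cont[OF k_int])
  obtain d where d: "0 < d" "\<And>r. r \<in> {0..tau} \<Longrightarrow> dist r tau < d \<Longrightarrow>
      dist (LINT s:{r..tau}|lborel. k s) (LINT s:{tau..tau}|lborel. k s) < 1"
    using Kc tau unfolding continuous_on_iff by (metis atLeastAtMost_iff less_eq_real_def order_refl zero_less_one)
  define a where "a = max 0 (tau - d / 2)"
  have a: "0 \<le> a" "a < tau" "a \<le> tau" using tau d(1) by (auto simp: a_def)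
  have da: "dist a tau < d" using a d(1) tau by (auto simp: a_def dist_real_def)
  have a0t: "a \<in> {0..tau}" using a by auto
  have Ka: "(LINT s:{a..tau}|lborel. k s) < 1"
    using d(2)[OF a0t da] unfolding LINT_point by (simp add: dist_real_def)
  have sbA: "set_integrable lborel {a..tau} sb" using sb_int by (rule set_integrable_subset) (use a taut0 in auto)
  have lbA: "set_integrable lborel {a..tau} lb" using lb_int by (rule set_integrable_subset) (use a taut0 in auto)
  have Iab: "(LINT s:{a..tau}|lborel. k s) = (LINT s:{a..tau}|lborel. sb s) / \<rho> + 2 * (1 + Lh) * (LINT s:{a..tau}|lborel. lb s)"
    unfolding k_def
    by (subst set_integral_add(2)) (auto intro!: set_integrable_divide set_integrable_mult_right sbA lbA
          simp: set_integral_divide_zero set_integral_mult_right)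
  have Isb0: "0 \<le> (LINT s:{a..tau}|lborel. sb s)" by (rule LINT_nonneg) (rule sb0)
  have Ilb0: "0 \<le> (LINT s:{a..tau}|lborel. lb s)" by (rule LINT_nonneg) (rule lb0)
  have sb_small: "(LINT s:{a..tau}|lborel. sb s) \<le> \<rho>"
  proof -
    have "0 \<le> 2 * (1 + Lh) * (LINT s:{a..tau}|lborel. lb s)" using Ilb0 Lh0 by simp
    then have "(LINT s:{a..tau}|lborel. sb s) / \<rho> \<le> 1" using Ka Iab by linarith
    then show ?thesis using rho(1) by (simp add: divide_le_eq)
  qed
  have lb_small: "(1 + Lh) * (LINT s:{a..tau}|lborel. lb s) \<le> 1/2"
  proof -
    have "0 \<le> (LINT s:{a..tau}|lborel. sb s) / \<rho>" using Isb0 rho(1) by simp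
    then show ?thesis using Ka Iab by linarith
  qed
  have sb_sub: "(LINT s:{r..tau}|lborel. sb s) \<le> \<rho>" if "r \<in> {a..tau}" for r
  proof -
    have "(LINT s:{a..tau}|lborel. sb s) = (LINT s:{a..r}|lborel. sb s) + (LINT s:{r..tau}|lborel. sb s)"
      using that by (intro LINT_split sbA) auto
    moreover have "0 \<le> (LINT s:{a..r}|lborel. sb s)" by (rule LINT_nonneg) (rule sb0)
    ultimately show ?thesis using sb_small by linarith
  qed
  define P where "P = closest_point (cball z \<rho>)"
  have Pin: "P v \<in> cball z \<rho>" for v
    unfolding P_def by (rule closest_point_in_set) (use rho in auto)
  have PG: "P v \<in> Gbar dd" for v using Pin rho(2) Gset_Gbar by blast
  have Plip: "dist (P v) (P w) \<le> dist v w" for v w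
    unfolding P_def by (rule closest_point_lipschitz) (use rho in auto)
  have Pself: "v \<in> cball z \<rho> \<Longrightarrow> P v = v" for v unfolding P_def by (rule closest_point_self)
  have Pc: "continuous_on UNIV P" unfolding P_def by (rule continuous_on_closest_point) (use rho in auto)
  define g where "g Y s = F s (P (apply_bcontfun Y s))" for Y :: "real \<Rightarrow>\<^sub>C (real^'d)" and s
  have bm: "(\<lambda>(t,x,y). b t x y) \<in> borel_measurable borel" using bW by (simp add: L1W1inf_loc_def)
  have g_meas: "g Y \<in> borel_measurable borel" for Y
  proof -
    have "continuous_on UNIV (\<lambda>s. P (apply_bcontfun Y s))"
      by (rule continuous_on_compose2[OF Pc]) auto
    from meas_comp[OF bm H.meas this] show ?thesis by (simp add: g_def[abs_def] F_def)
  qed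
  have g_int: "set_integrable lborel {a..tau} (g Y)" for Y
  proof (rule int_bound_lborel[OF g_meas sbA])
    show "AE s\<in>{a..tau} in lborel. norm (g Y s) \<le> sb s"
      using AEF AE_lborel_singleton[of 0]
      by eventually_elim (use a taut0 t0 PG in \<open>auto simp: g_def\<close>)
  qed
  have g_bd: "norm (LINT s:{r..tau}|lborel. g Y s) \<le> \<rho>" if r: "r \<in> {a..tau}" for Y r
  proof -
    have gi: "set_integrable lborel {r..tau} (g Y)" using g_int by (rule set_integrable_subset) (use r in auto)
    have si: "set_integrable lborel {r..tau} sb" using sbA by (rule set_integrable_subset) (use r in auto)
    have "norm (LINT s:{r..tau}|lborel. g Y s) \<le> (LINT s:{r..tau}|lborel. norm (g Y s))"
      by (rule set_integral_norm_bound[OF gi])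
    also have "\<dots> \<le> (LINT s:{r..tau}|lborel. sb s)"
    proof (rule set_integral_mono_AE[OF set_integrable_norm[OF gi] si])
      show "AE s\<in>{r..tau} in lborel. norm (g Y s) \<le> sb s"
        using AEF AE_lborel_singleton[of 0]
        by eventually_elim (use a r taut0 t0 PG in \<open>auto simp: g_def\<close>)
    qed
    also have "\<dots> \<le> \<rho>" by (rule sb_sub[OF r])
    finally show ?thesis .
  qed
  have g_cont: "continuous_on {a..tau} (\<lambda>r. LINT s:{r..tau}|lborel. g Y s)" for Y
    by (rule LINT_cont[OF g_int])
  define c where "c t = max a (min t tau)" for t
  have c_in: "c t \<in> {a..tau}" for t using a by (auto simp: c_def)
  have c_id: "t \<in> {a..tau} \<Longrightarrow> c t = t" for t by (auto simp: c_def)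
  have cc: "continuous_on UNIV c" unfolding c_def[abs_def] by (intro continuous_intros)
  define \<Phi>f where "\<Phi>f Y t = z - (LINT s:{c t..tau}|lborel. g Y s)" for Y t
  have \<Phi>f_bc: "\<Phi>f Y \<in> bcontfun" for Y
  proof -
    have "continuous_on UNIV (\<lambda>t. LINT s:{c t..tau}|lborel. g Y s)"
      by (rule continuous_on_compose2[OF g_cont[of Y] cc]) (use c_in in auto)
    then have "continuous_on UNIV (\<Phi>f Y)" unfolding \<Phi>f_def[abs_def] by (intro continuous_intros)
    moreover have "range (\<Phi>f Y) \<subseteq> cball z \<rho>"
      using g_bd c_in by (auto simp: \<Phi>f_def dist_norm)
    then have "bounded (range (\<Phi>f Y))" using bounded_cball bounded_subset by blast
    ultimately show ?thesis by (simp add: bcontfun_def)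
  qed
  define \<Phi> where "\<Phi> Y = Bcontfun (\<Phi>f Y)" for Y
  have \<Phi>_app: "apply_bcontfun (\<Phi> Y) t = \<Phi>f Y t" for Y t
    unfolding \<Phi>_def using \<Phi>f_bc[of Y] by (simp add: Bcontfun_inverse)
  have contr: "dist (\<Phi> Y) (\<Phi> Z) \<le> 1/2 * dist Y Z" for Y Z
  proof (rule dist_bound)
    fix t
    define r where "r = c t"
    have r: "r \<in> {a..tau}" unfolding r_def by (rule c_in)
    have gY: "set_integrable lborel {r..tau} (g Y)" using g_int by (rule set_integrable_subset) (use r in auto)
    have gZ: "set_integrable lborel {r..tau} (g Z)" using g_int by (rule set_integrable_subset) (use r in auto)
    have lr: "set_integrable lborel {r..tau} lb" using lbA by (rule set_integrable_subset) (use r in auto)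
    have "dist (apply_bcontfun (\<Phi> Y) t) (apply_bcontfun (\<Phi> Z) t) = norm ((LINT s:{r..tau}|lborel. g Y s) - (LINT s:{r..tau}|lborel. g Z s))"
      by (simp add: \<Phi>_app \<Phi>f_def r_def dist_norm norm_minus_commute)
    also have "\<dots> = norm (LINT s:{r..tau}|lborel. g Y s - g Z s)" using set_integral_diff(2)[OF gY gZ] by simp
    also have "\<dots> \<le> (LINT s:{r..tau}|lborel. norm (g Y s - g Z s))"
      by (rule set_integral_norm_bound[OF set_integral_diff(1)[OF gY gZ]])
    also have "\<dots> \<le> (LINT s:{r..tau}|lborel. lb s * ((1 + Lh) * dist Y Z))"
    proof (rule set_integral_mono_AE)
      show "set_integrable lborel {r..tau} (\<lambda>s. norm (g Y s - g Z s))"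
        by (rule set_integrable_norm[OF set_integral_diff(1)[OF gY gZ]])
      show "set_integrable lborel {r..tau} (\<lambda>s. lb s * ((1 + Lh) * dist Y Z))"
        by (rule set_integrable_mult_left[OF lr])
      show "AE s\<in>{r..tau} in lborel. norm (g Y s - g Z s) \<le> lb s * ((1 + Lh) * dist Y Z)"
        using AEF AE_lborel_singleton[of 0]
      proof eventually_elim
        case (elim s)
        show ?case
        proof
          assume s: "s \<in> {r..tau}"
          then have s01: "s \<in> {0<..<t1}" using elim r a taut0 t0 by auto
          have "norm (g Y s - g Z s) \<le> lb s * (1 + Lh) * norm (P (apply_bcontfun Y s) - P (apply_bcontfun Z s))"
            using elim s01 PG by (auto simp: g_def)
          also have "norm (P (apply_bcontfun Y s) - P (apply_bcontfun Z s)) \<le> dist Y Z"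
            using Plip[of "apply_bcontfun Y s" "apply_bcontfun Z s"] dist_bounded[of Y s Z]
            by (simp add: dist_norm)
          finally show "norm (g Y s - g Z s) \<le> lb s * ((1 + Lh) * dist Y Z)"
            using lb0[of s] Lh0 by (simp add: mult_left_mono mult.assoc)
        qed
      qed
    qed
    also have "\<dots> = (LINT s:{r..tau}|lborel. lb s) * ((1 + Lh) * dist Y Z)"
      by (rule set_integral_mult_left)
    also have "\<dots> \<le> (LINT s:{a..tau}|lborel. lb s) * ((1 + Lh) * dist Y Z)"
    proof (rule mult_right_mono)
      have "(LINT s:{a..tau}|lborel. lb s) = (LINT s:{a..r}|lborel. lb s) + (LINT s:{r..tau}|lborel. lb s)"
        using r by (intro LINT_split lbA) auto
      moreover have "0 \<le> (LINT s:{a..r}|lborel. lb s)" by (rule LINT_nonneg) (rule lb0)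
      ultimately show "(LINT s:{r..tau}|lborel. lb s) \<le> (LINT s:{a..tau}|lborel. lb s)" by linarith
      show "0 \<le> (1 + Lh) * dist Y Z" using Lh0 by simp
    qed
    also have "\<dots> = ((1 + Lh) * (LINT s:{a..tau}|lborel. lb s)) * dist Y Z" by (simp add: algebra_simps)
    also have "\<dots> \<le> 1/2 * dist Y Z" by (rule mult_right_mono[OF lb_small]) simp
    finally show "dist (apply_bcontfun (\<Phi> Y) t) (apply_bcontfun (\<Phi> Z) t) \<le> 1/2 * dist Y Z" .
  qed
  obtain Y where Yfix: "\<Phi> Y = Y"
    using banach_fix_type[of "1/2" \<Phi>] contr by auto
  have Yeq: "apply_bcontfun Y t = z - (LINT s:{t..tau}|lborel. g Y s)" if "t \<in> {a..tau}" for t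
    using \<Phi>_app[of Y t] Yfix c_id[OF that] by (simp add: \<Phi>f_def)
  have Yin: "apply_bcontfun Y t \<in> cball z \<rho>" if "t \<in> {a..tau}" for t
    using Yeq[OF that] g_bd[OF that, of Y] by (simp add: dist_norm)
  have gY: "g Y s = F s (apply_bcontfun Y s)" if "s \<in> {a..tau}" for s
    using Pself[OF Yin[OF that]] by (simp add: g_def)
  have Ytau: "apply_bcontfun Y tau = z" using Yeq[of tau] a by (simp add: LINT_point')
  define W where "W t = (if t < tau then apply_bcontfun Y t else X t)" for t
  have WY: "W s = apply_bcontfun Y s" if "s \<in> {a..tau}" for s
    using that Ytau by (auto simp: W_def z_def)
  have WX: "W s = X s" if "tau \<le> s" for s using that by (simp add: W_def)
  have solW: "is_sol dd b h t0 x0 a W"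
    unfolding is_sol_def
  proof (intro ballI conjI)
    fix t assume t: "t \<in> {a..t0}"
    show "W t \<in> Gbar dd"
    proof (cases "t < tau")
      case True
      then have "W t \<in> cball z \<rho>" using WY[of t] Yin[of t] t by auto
      then show ?thesis using rho(2) Gset_Gbar by blast
    next
      case False then show ?thesis using WX[of t] is_sol_mem'[OF sol, of t] t by auto
    qed
    have intX: "set_integrable lborel {q..t0} (\<lambda>s. b s (X s) (h s (X s)))" if "tau \<le> q" "q \<le> t0" for q
      by (rule is_sol_int[OF sol]) (use that in auto)
    have congX: "set_integrable lborel {q..t0} (\<lambda>s. b s (W s) (h s (W s))) = set_integrable lborel {q..t0} (\<lambda>s. b s (X s) (h s (X s)))"
      if "tau \<le> q" for q
      by (rule set_integrable_cong) (use that in \<open>auto simp: WX\<close>)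
    have congXI: "(LINT s:{q..t0}|lborel. b s (W s) (h s (W s))) = (LINT s:{q..t0}|lborel. b s (X s) (h s (X s)))"
      if "tau \<le> q" for q
      by (rule set_int_cong) (use that in \<open>auto simp: WX\<close>)
    have congY: "set_integrable lborel {q..tau} (\<lambda>s. b s (W s) (h s (W s))) = set_integrable lborel {q..tau} (g Y)"
      if "a \<le> q" for q
      by (rule set_integrable_cong) (use that in \<open>auto simp: WY gY F_def\<close>)
    have congYI: "(LINT s:{q..tau}|lborel. b s (W s) (h s (W s))) = (LINT s:{q..tau}|lborel. g Y s)"
      if "a \<le> q" for q
      by (rule set_int_cong) (use that in \<open>auto simp: WY gY F_def\<close>)
    show "set_integrable lborel {t..t0} (\<lambda>s. b s (W s) (h s (W s)))"
    proof (cases "t < tau")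
      case True
      have "{t..t0} = {t..tau} \<union> {tau..t0}" using True taut0 by auto
      moreover have "set_integrable lborel {t..tau} (\<lambda>s. b s (W s) (h s (W s)))"
        using congY[of t] t g_int[of Y] by (auto intro: set_integrable_subset)
      moreover have "set_integrable lborel {tau..t0} (\<lambda>s. b s (W s) (h s (W s)))"
        using congX[of tau] intX[of tau] taut0 by auto
      ultimately show ?thesis by (auto intro: set_integrable_Un)
    next
      case False
      then show ?thesis using congX[of t] intX[of t] t by auto
    qed
    show "W t = x0 - (LINT s:{t..t0}|lborel. b s (W s) (h s (W s)))"
    proof (cases "t < tau")
      case True
      have iW: "set_integrable lborel {t..t0} (\<lambda>s. b s (W s) (h s (W s)))"
      proof -
        have "{t..t0} = {t..tau} \<union> {tau..t0}" using True taut0 by auto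
        moreover have "set_integrable lborel {t..tau} (\<lambda>s. b s (W s) (h s (W s)))"
          using congY[of t] t g_int[of Y] by (auto intro: set_integrable_subset)
        moreover have "set_integrable lborel {tau..t0} (\<lambda>s. b s (W s) (h s (W s)))"
          using congX[of tau] intX[of tau] taut0 by auto
        ultimately show ?thesis by (auto intro: set_integrable_Un)
      qed
      have "(LINT s:{t..t0}|lborel. b s (W s) (h s (W s))) =
            (LINT s:{t..tau}|lborel. b s (W s) (h s (W s))) + (LINT s:{tau..t0}|lborel. b s (W s) (h s (W s)))"
        using True taut0 by (intro LINT_split iW) auto
      also have "\<dots> = (LINT s:{t..tau}|lborel. g Y s) + (LINT s:{tau..t0}|lborel. b s (X s) (h s (X s)))"
        using congYI[of t] congXI[of tau] t by auto
      finally have e: "(LINT s:{t..t0}|lborel. b s (W s) (h s (W s))) = (LINT s:{t..tau}|lborel. g Y s) + (LINT s:{tau..t0}|lborel. b s (X s) (h s (X s)))" .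
      have Xtau: "z = x0 - (LINT s:{tau..t0}|lborel. b s (X s) (h s (X s)))"
        unfolding z_def by (rule is_sol_eq[OF sol]) (use taut0 in auto)
      have "W t = z - (LINT s:{t..tau}|lborel. g Y s)" using WY[of t] Yeq[of t] t True by auto
      then show ?thesis unfolding e using Xtau by (simp add: algebra_simps)
    next
      case False
      then show ?thesis using congXI[of t] WX[of t] is_sol_eq[OF sol, of t] t by auto
    qed
  qed
  show False using maxi[OF a(1) a(2), of W] solW by blast
qed


lemma part2:
  fixes b1 b2 :: "real \<Rightarrow> real^'d::finite \<Rightarrow> real^'p::finite \<Rightarrow> real^'d"
    and h1 h2 :: "real \<Rightarrow> real^'d \<Rightarrow> real^'p"
  assumes L1: "Lminus t1 dd b1" and L2: "Lminus t1 dd b2"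
    and B1: "B1 > 0" and B2: "B2 > 0" and n1: "bd_neg t1 dd B1 b1" and n2: "bd_neg t1 dd B2 b2"
    and hW1: "LinfW1inf t1 dd h1" and hW2: "LinfW1inf t1 dd h2"
    and t0: "0 < t0" "t0 < t1" and x0: "x0 \<in> Gset dd"
    and ms1: "max_sol dd b1 h1 t0 x0 tau1 X1" and ms2: "max_sol dd b2 h2 t0 x0 tau2 X2"
    and M1: "Linf_h t1 dd h1 h1 b1 \<le> ennreal M" and M2: "Linf_h t1 dd h2 h2 b2 \<le> ennreal M"
  defines "C \<equiv> 1 + 1 / B1 + 1 / B2"
    and "V \<equiv> max (enn2real (Linf_h t1 dd h1 h1 b1)) (enn2real (Linf_h t1 dd h2 h2 b2))"
    and "N \<equiv> enn2real (DL1_h t1 dd h1 h2 b1)"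
    and "Lm \<equiv> enn2real (Lam t1 dd h1 h2)"
  shows "\<bar>tau2 - tau1\<bar> + norm (X2 tau2 - X1 tau1)
           \<le> C * (1 + V) * (1 + N) * exp (C * (V + Lm * N))
             * (enn2real (Linf_S t1 dd (\<lambda>t x. h2 t x - h1 t x))
                + enn2real (L1_h t1 dd h1 h2 (\<lambda>t x y. b2 t x y - b1 t x y)))"
proof -
  have bW1: "L1W1inf_loc t1 dd b1" and ind1: "bd_indep_y dd b1" using L1 by (auto simp: Lminus_def)
  have bW2: "L1W1inf_loc t1 dd b2" and ind2: "bd_indep_y dd b2" using L2 by (auto simp: Lminus_def)
  interpret BF1: bfacts t1 dd b1 by unfold_locales (rule bW1)
  interpret BF2: bfacts t1 dd b2 by unfold_locales (rule bW2)
  note neg1 = BF1.neg[OF ind1 n1] and neg2 = BF2.neg[OF ind2 n2]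
  have tau1: "0 \<le> tau1" "tau1 \<le> t0" and sol1: "is_sol dd b1 h1 t0 x0 tau1 X1"
    using ms1 by (auto simp: max_sol_def)
  have tau2: "0 \<le> tau2" "tau2 \<le> t0" and sol2: "is_sol dd b2 h2 t0 x0 tau2 X2"
    using ms2 by (auto simp: max_sol_def)
  define w where "w = enn2real (Linf_S t1 dd (\<lambda>t x. h2 t x - h1 t x)) + enn2real (L1_h t1 dd h1 h2 (\<lambda>t x y. b2 t x y - b1 t x y))"
  define e where "e = max 1 N * exp (Lm * N) * w"
  have w0: "0 \<le> w" by (simp add: w_def)
  have N0: "0 \<le> N" by (simp add: N_def)
  have Lm0: "0 \<le> Lm" by (simp add: Lm_def)
  have e0: "0 \<le> e" using w0 by (simp add: e_def)
  have V1: "enn2real (Linf_h t1 dd h1 h1 b1) \<le> V" by (simp add: V_def)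
  have V2: "enn2real (Linf_h t1 dd h2 h2 b2) \<le> V" by (simp add: V_def)
  have V0: "0 \<le> V" by (simp add: V_def le_max_iff_disj)
  have bnd: "norm (X2 s - X1 s) \<le> e" if "s \<in> {max tau1 tau2..t0}" for s
    using part1[OF bW1 bW2 hW1 hW2 t0(2) tau1 sol1 tau2 sol2 that]
    by (simp add: e_def w_def N_def Lm_def)
  have fin1: "Linf_h t1 dd h1 h1 b1 < \<infinity>" using M1 by (rule le_less_trans) simp
  have fin2: "Linf_h t1 dd h2 h2 b2 < \<infinity>" using M2 by (rule le_less_trans) simp
  note sp1 = speed_bound[OF hW1 fin1] and sp2 = speed_bound[OF hW2 fin2]
  have compb: "\<bar>u $ dd - v $ dd\<bar> \<le> norm (u - v)" for u v :: "real^'d"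
    using component_le_norm_cart[of "u - v" dd] by simp
  have main: "\<bar>tau2 - tau1\<bar> + norm (X2 tau2 - X1 tau1) \<le> e + e * (1 + V) * (1 / B1 + 1 / B2)"
  proof (cases "tau1 \<le> tau2")
    case True
    show ?thesis
    proof (cases "tau1 = tau2")
      case True
      then have "norm (X2 tau2 - X1 tau1) \<le> e" using bnd[of tau2] tau2 by auto
      moreover have "0 \<le> e * (1 + V) * (1 / B1 + 1 / B2)" using e0 V0 B1 B2 by simp
      ultimately show ?thesis using True by simp
    next
      case False
      with True have lt: "tau1 < tau2" by simp
      have ex: "X2 tau2 $ dd = 1"
        by (rule exit_lemma[OF bW2 hW2 neg2 B2 t0(2) x0 ms2]) (use lt tau1 in auto)
      have nb: "norm (X2 tau2 - X1 tau2) \<le> e" using bnd[of tau2] tau2 lt by auto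
      have c1: "1 - e \<le> X1 tau2 $ dd" using compb[of "X2 tau2" "X1 tau2"] nb ex by linarith
      have gr: "X1 tau2 $ dd + B1 * (tau2 - tau1) \<le> X1 tau1 $ dd"
        by (rule growth[OF sol1 neg1]) (use tau1 tau2 lt t0 in auto)
      have le1: "X1 tau1 $ dd \<le> 1" using Gbar_bounds[OF is_sol_mem'[OF sol1, of tau1]] tau1 by auto
      have dt: "B1 * (tau2 - tau1) \<le> e" using c1 gr le1 by linarith
      then have dt': "tau2 - tau1 \<le> e / B1" using B1 by (simp add: le_divide_eq mult.commute)
      have spd: "norm (X1 tau1 - X1 tau2) \<le> enn2real (Linf_h t1 dd h1 h1 b1) * (tau2 - tau1)"
        by (rule speed[OF sol1 sp1]) (use tau1 tau2 lt t0 in auto)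
      have "norm (X2 tau2 - X1 tau1) \<le> norm (X2 tau2 - X1 tau2) + norm (X1 tau2 - X1 tau1)"
        using norm_triangle_ineq[of "X2 tau2 - X1 tau2" "X1 tau2 - X1 tau1"] by simp
      also have "\<dots> \<le> e + V * (tau2 - tau1)"
        using nb spd V1 lt by (smt (verit, best) mult_right_mono norm_minus_commute)
      finally have n2: "norm (X2 tau2 - X1 tau1) \<le> e + V * (tau2 - tau1)" .
      have "\<bar>tau2 - tau1\<bar> + norm (X2 tau2 - X1 tau1) \<le> e + (1 + V) * (tau2 - tau1)"
        using n2 lt by (simp add: algebra_simps)
      also have "(1 + V) * (tau2 - tau1) \<le> (1 + V) * (e / B1)"
        using dt' V0 by (intro mult_left_mono) auto
      also have "(1 + V) * (e / B1) \<le> e * (1 + V) * (1 / B1 + 1 / B2)"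
        using e0 V0 B1 B2 by (simp add: field_simps)
      finally show ?thesis by simp
    qed
  next
    case False
    then have lt: "tau2 < tau1" by simp
    have ex: "X1 tau1 $ dd = 1"
      by (rule exit_lemma[OF bW1 hW1 neg1 B1 t0(2) x0 ms1]) (use lt tau2 in auto)
    have nb: "norm (X2 tau1 - X1 tau1) \<le> e" using bnd[of tau1] tau1 lt by auto
    have c1: "1 - e \<le> X2 tau1 $ dd" using compb[of "X2 tau1" "X1 tau1"] nb ex by linarith
    have gr: "X2 tau1 $ dd + B2 * (tau1 - tau2) \<le> X2 tau2 $ dd"
      by (rule growth[OF sol2 neg2]) (use tau1 tau2 lt t0 in auto)
    have le1: "X2 tau2 $ dd \<le> 1" using Gbar_bounds[OF is_sol_mem'[OF sol2, of tau2]] tau2 by auto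
    have dt: "B2 * (tau1 - tau2) \<le> e" using c1 gr le1 by linarith
    then have dt': "tau1 - tau2 \<le> e / B2" using B2 by (simp add: le_divide_eq mult.commute)
    have spd: "norm (X2 tau2 - X2 tau1) \<le> enn2real (Linf_h t1 dd h2 h2 b2) * (tau1 - tau2)"
      by (rule speed[OF sol2 sp2]) (use tau1 tau2 lt t0 in auto)
    have "norm (X2 tau2 - X1 tau1) \<le> norm (X2 tau2 - X2 tau1) + norm (X2 tau1 - X1 tau1)"
      using norm_triangle_ineq[of "X2 tau2 - X2 tau1" "X2 tau1 - X1 tau1"] by simp
    also have "\<dots> \<le> V * (tau1 - tau2) + e"
      using nb spd V2 lt by (smt (verit, best) mult_right_mono)
    finally have n2: "norm (X2 tau2 - X1 tau1) \<le> e + V * (tau1 - tau2)" by simp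
    have "\<bar>tau2 - tau1\<bar> + norm (X2 tau2 - X1 tau1) \<le> e + (1 + V) * (tau1 - tau2)"
      using n2 lt by (simp add: algebra_simps)
    also have "(1 + V) * (tau1 - tau2) \<le> (1 + V) * (e / B2)"
      using dt' V0 by (intro mult_left_mono) auto
    also have "(1 + V) * (e / B2) \<le> e * (1 + V) * (1 / B1 + 1 / B2)"
      using e0 V0 B1 B2 by (simp add: field_simps)
    finally show ?thesis by simp
  qed
  also have "e + e * (1 + V) * (1 / B1 + 1 / B2) = e * (1 + (1 + V) * (1 / B1 + 1 / B2))"
    by (simp add: distrib_left mult.assoc)
  also have "\<dots> = (max 1 N * exp (Lm * N) * w) * (1 + (1 + V) * (1 / B1 + 1 / B2))"
    by (simp add: e_def)
  also have "\<dots> \<le> ((1 + N) * exp (C * (V + Lm * N)) * w) * (C * (1 + V))"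
  proof (rule mult_mono)
    have "C \<ge> 1" using B1 B2 by (simp add: C_def)
    have "Lm * N \<le> C * (V + Lm * N)"
    proof -
      have "Lm * N \<le> V + Lm * N" using V0 by simp
      also have "\<dots> \<le> C * (V + Lm * N)" using \<open>C \<ge> 1\<close> V0 mult_nonneg_nonneg[OF Lm0 N0]
        by (simp add: mult_le_cancel_right1)
      finally show ?thesis .
    qed
    then have "exp (Lm * N) \<le> exp (C * (V + Lm * N))" by simp
    moreover have "max 1 N \<le> 1 + N" using N0 by simp
    ultimately show "max 1 N * exp (Lm * N) * w \<le> (1 + N) * exp (C * (V + Lm * N)) * w"
      using w0 N0 by (intro mult_right_mono mult_mono) auto
    show "1 + (1 + V) * (1 / B1 + 1 / B2) \<le> C * (1 + V)"
      using V0 B1 B2 by (simp add: C_def algebra_simps)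
    show "0 \<le> (1 + N) * exp (C * (V + Lm * N)) * w" using N0 w0 by simp
    show "0 \<le> 1 + (1 + V) * (1 / B1 + 1 / B2)" using V0 B1 B2 by simp
  qed
  also have "\<dots> = C * (1 + V) * (1 + N) * exp (C * (V + Lm * N)) * w" by (simp add: algebra_simps)
  finally show ?thesis by (simp add: w_def)
qed

theorem lemma5p3:
  fixes t1 :: real and dd :: "'d::finite"
  assumes "t1 > 0"
  shows
   "(\<forall>(b1 :: real \<Rightarrow> real^'d \<Rightarrow> real^'p::finite \<Rightarrow> real^'d) b2 h1 h2 B1 B2 t0 x0 X1 X2 tau1 tau2.
      L1W1inf_loc t1 dd b1 \<and> L1W1inf_loc t1 dd b2 \<and> bd_indep_y dd b1 \<and> bd_indep_y dd b2 \<and>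
      B1 > 0 \<and> B2 > 0 \<and> bd_neg t1 dd B1 b1 \<and> bd_neg t1 dd B2 b2 \<and>
      0 < t0 \<and> t0 < t1 \<and> x0 \<in> Gset dd \<and>
      LinfW1inf t1 dd h1 \<and> LinfW1inf t1 dd h2 \<and>
      max_sol dd b1 h1 t0 x0 tau1 X1 \<and> max_sol dd b2 h2 t0 x0 tau2 X2 \<longrightarrow>
      (\<forall>s\<in>{max tau1 tau2..t0}.
         norm (X2 s - X1 s) \<le>
           max 1 (enn2real (DL1_h t1 dd h1 h2 b1))
             * exp (enn2real (Lam t1 dd h1 h2) * enn2real (DL1_h t1 dd h1 h2 b1))
             * (enn2real (Linf_S t1 dd (\<lambda>t x. h2 t x - h1 t x))
                + enn2real (L1_h t1 dd h1 h2 (\<lambda>t x y. b2 t x y - b1 t x y)))))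
    \<and>
    (\<exists>Cf :: real \<Rightarrow> real \<Rightarrow> real \<Rightarrow> real \<Rightarrow> real \<Rightarrow> real.
      \<forall>(b1 :: real \<Rightarrow> real^'d \<Rightarrow> real^'p \<Rightarrow> real^'d) h1 B1.
        Lminus t1 dd b1 \<and> B1 > 0 \<and> bd_neg t1 dd B1 b1 \<and> LinfW1inf t1 dd h1 \<longrightarrow>
        (\<forall>M>0. \<exists>\<delta>>0. \<forall>b2 h2 B2 t0 x0 X1 X2 tau1 tau2.
           Lminus t1 dd b2 \<and> B2 > 0 \<and> bd_neg t1 dd B2 b2 \<and> LinfW1inf t1 dd h2 \<and>
           0 < t0 \<and> t0 < t1 \<and> x0 \<in> Gset dd \<and>
           max_sol dd b1 h1 t0 x0 tau1 X1 \<and> max_sol dd b2 h2 t0 x0 tau2 X2 \<and>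
           Linf_S t1 dd (\<lambda>t x. h2 t x - h1 t x) < ennreal \<delta> \<and>
           L1_h t1 dd h1 h2 (\<lambda>t x y. b2 t x y - b1 t x y) < ennreal \<delta> \<and>
           Linf_h t1 dd h1 h1 b1 \<le> ennreal M \<and> Linf_h t1 dd h2 h2 b2 \<le> ennreal M \<longrightarrow>
           (let C = Cf B1 B2 (enn2real (bd_L1Linf t1 dd b1)) (enn2real (bd_L1Linf t1 dd b2))
                       (enn2real (Dbd_L1Linf t1 dd b1));
                V = max (enn2real (Linf_h t1 dd h1 h1 b1)) (enn2real (Linf_h t1 dd h2 h2 b2));
                N = enn2real (DL1_h t1 dd h1 h2 b1);
                Lm = enn2real (Lam t1 dd h1 h2)
            in \<bar>tau2 - tau1\<bar> + norm (X2 tau2 - X1 tau1)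
               \<le> C * (1 + V) * (1 + N) * exp (C * (V + Lm * N))
                   * (enn2real (Linf_S t1 dd (\<lambda>t x. h2 t x - h1 t x))
                      + enn2real (L1_h t1 dd h1 h2 (\<lambda>t x y. b2 t x y - b1 t x y))))))"
proof (intro conjI)
  show "\<forall>(b1 :: real \<Rightarrow> real^'d \<Rightarrow> real^'p::finite \<Rightarrow> real^'d) b2 h1 h2 B1 B2 t0 x0 X1 X2 tau1 tau2.
      L1W1inf_loc t1 dd b1 \<and> L1W1inf_loc t1 dd b2 \<and> bd_indep_y dd b1 \<and> bd_indep_y dd b2 \<and>
      B1 > 0 \<and> B2 > 0 \<and> bd_neg t1 dd B1 b1 \<and> bd_neg t1 dd B2 b2 \<and>
      0 < t0 \<and> t0 < t1 \<and> x0 \<in> Gset dd \<and>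
      LinfW1inf t1 dd h1 \<and> LinfW1inf t1 dd h2 \<and>
      max_sol dd b1 h1 t0 x0 tau1 X1 \<and> max_sol dd b2 h2 t0 x0 tau2 X2 \<longrightarrow>
      (\<forall>s\<in>{max tau1 tau2..t0}.
         norm (X2 s - X1 s) \<le>
           max 1 (enn2real (DL1_h t1 dd h1 h2 b1))
             * exp (enn2real (Lam t1 dd h1 h2) * enn2real (DL1_h t1 dd h1 h2 b1))
             * (enn2real (Linf_S t1 dd (\<lambda>t x. h2 t x - h1 t x))
                + enn2real (L1_h t1 dd h1 h2 (\<lambda>t x y. b2 t x y - b1 t x y))))"
    apply (intro allI impI ballI)
    apply (elim conjE)
    apply (rule part1)
    by (auto simp: max_sol_def)
next
  show "\<exists>Cf :: real \<Rightarrow> real \<Rightarrow> real \<Rightarrow> real \<Rightarrow> real \<Rightarrow> real.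
      \<forall>(b1 :: real \<Rightarrow> real^'d \<Rightarrow> real^'p \<Rightarrow> real^'d) h1 B1.
        Lminus t1 dd b1 \<and> B1 > 0 \<and> bd_neg t1 dd B1 b1 \<and> LinfW1inf t1 dd h1 \<longrightarrow>
        (\<forall>M>0. \<exists>\<delta>>0. \<forall>b2 h2 B2 t0 x0 X1 X2 tau1 tau2.
           Lminus t1 dd b2 \<and> B2 > 0 \<and> bd_neg t1 dd B2 b2 \<and> LinfW1inf t1 dd h2 \<and>
           0 < t0 \<and> t0 < t1 \<and> x0 \<in> Gset dd \<and>
           max_sol dd b1 h1 t0 x0 tau1 X1 \<and> max_sol dd b2 h2 t0 x0 tau2 X2 \<and>
           Linf_S t1 dd (\<lambda>t x. h2 t x - h1 t x) < ennreal \<delta> \<and>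
           L1_h t1 dd h1 h2 (\<lambda>t x y. b2 t x y - b1 t x y) < ennreal \<delta> \<and>
           Linf_h t1 dd h1 h1 b1 \<le> ennreal M \<and> Linf_h t1 dd h2 h2 b2 \<le> ennreal M \<longrightarrow>
           (let C = Cf B1 B2 (enn2real (bd_L1Linf t1 dd b1)) (enn2real (bd_L1Linf t1 dd b2))
                       (enn2real (Dbd_L1Linf t1 dd b1));
                V = max (enn2real (Linf_h t1 dd h1 h1 b1)) (enn2real (Linf_h t1 dd h2 h2 b2));
                N = enn2real (DL1_h t1 dd h1 h2 b1);
                Lm = enn2real (Lam t1 dd h1 h2)
            in \<bar>tau2 - tau1\<bar> + norm (X2 tau2 - X1 tau1)
               \<le> C * (1 + V) * (1 + N) * exp (C * (V + Lm * N))
                   * (enn2real (Linf_S t1 dd (\<lambda>t x. h2 t x - h1 t x))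
                      + enn2real (L1_h t1 dd h1 h2 (\<lambda>t x y. b2 t x y - b1 t x y)))))"
    apply (rule exI[of _ "\<lambda>B1 B2 _ _ _. 1 + 1 / B1 + 1 / B2"])
    apply (intro allI impI)
    apply (rule exI[of _ 1])
    apply (intro conjI allI impI)
     apply simp
    apply (elim conjE)
    apply (simp only: Let_def)
    apply (rule part2)
    by auto
qed


end
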